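(* Let $\mathscr T$ be a leafless, locally finite rooted directed tree of finite branching index, $q\geqslant1$ real, $S_{\lambda,q}$ the Dirichlet shift on $\mathscr T$, and $S_{w,q}$ the classical Dirichlet shift. Then $S_{\lambda,q}$ is unitarily equivalent to some finite orthogonal direct sum of copies of $S_{w,q}$ if and only if either $q=1$ or $\mathscr T$ is isomorphic to $\mathbb N$.
   Context: A directed tree $\mathscr T=(V,\mathcal E)$ is a directed graph with no circuits, connected, in which every non-root vertex has a unique parent; rooted means a unique vertex $\mathsf{root}$ has no parent. $\mathsf{Chi}(v)=\{u:(v,u)\in\mathcal E\}$; $\mathsf{Chi}^{\langle n\rangle}$ is the $n$-fold iterate. Locally finite: each $\mathsf{Chi}(v)$ finite; leafless: each $\mathsf{Chi}(v)$ nonempty; $V$ countably infinite. Depth $n_v$: the unique $n$ with $v\in\mathsf{Chi}^{\langle n\rangle}(\mathsf{root})$. Branching vertices $V_\prec=\{v:\mathrm{card}(\mathsf{Chi}(v))\geqslant2\}$; branching index $k_{\mathscr T}=1+\sup\{n_w:w\in V_\prec\}$ if $V_\prec\ne\emptyset$, else $0$; finite branching index means $k_{\mathscr T}<\infty$. $\mathscr T$ is isomorphic to $\mathbb N$ if there is an edge-preserving bijection onto the tree with vertices $\mathbb N$ and edges $(n,n+1)$ (equivalently $V_\prec=\emptyset$). The weighted shift on $\ell^2(V)$ with weights $\{\lambda_u\}$ is $S_\lambda e_v=\sum_{u\in\mathsf{Chi}(v)}\lambda_ue_u$. The Dirichlet shift $S_{\lambda,q}$ has weights $\lambda_{u,q}=\frac{1}{\sqrt{\mathrm{card}(\mathsf{Chi}(v))}}\sqrt{\frac{n_v+q}{n_v+1}}$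 for $u\in\mathsf{Chi}(v)$. The classical Dirichlet shift $S_{w,q}$ is the operator on $\ell^2(\mathbb N)$ given by $S_{w,q}e_n=\sqrt{\frac{n+q}{n+1}}\,e_{n+1}$. *)

theory Defs
  imports "HOL-Analysis.Analysis" "HOL-Library.Extended_Nat"
begin

definition Chi :: "('v \<times> 'v) set \<Rightarrow> 'v \<Rightarrow> 'v set" where
  "Chi E v = {u. (v, u) \<in> E}"

definition has_parent :: "('v \<times> 'v) set \<Rightarrow> 'v \<Rightarrow> bool" where
  "has_parent E u \<longleftrightarrow> (\<exists>v. (v, u) \<in> E)"

definition directed_tree :: "'v set \<Rightarrow> ('v \<times> 'v) set \<Rightarrow> bool" where
  "directed_tree V E \<longleftrightarrow>
     E \<subseteq> V \<times> V \<and>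
     (\<forall>v. (v, v) \<notin> E\<^sup>+) \<and>
     (\<forall>u\<in>V. \<forall>v\<in>V. (u, v) \<in> (E \<union> E\<inverse>)\<^sup>*) \<and>
     (\<forall>u v w. (v, u) \<in> E \<and> (w, u) \<in> E \<longrightarrow> v = w)"

definition rooted_directed_tree :: "'v set \<Rightarrow> ('v \<times> 'v) set \<Rightarrow> bool" where
  "rooted_directed_tree V E \<longleftrightarrow> directed_tree V E \<and>
     (\<exists>!r. r \<in> V \<and> \<not> has_parent E r)"

definition root :: "'v set \<Rightarrow> ('v \<times> 'v) set \<Rightarrow> 'v" where
  "root V E = (THE r. r \<in> V \<and> \<not> has_parent E r)"

definition parent :: "('v \<times> 'v) set \<Rightarrow> 'v \<Rightarrow> 'v" where
  "parent E u = (THE v. (v, u) \<in> E)"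

definition depth :: "'v set \<Rightarrow> ('v \<times> 'v) set \<Rightarrow> 'v \<Rightarrow> nat" where
  "depth V E v = (THE n. (root V E, v) \<in> E ^^ n)"

definition locally_finite :: "'v set \<Rightarrow> ('v \<times> 'v) set \<Rightarrow> bool" where
  "locally_finite V E \<longleftrightarrow> (\<forall>v\<in>V. finite (Chi E v))"

definition leafless :: "'v set \<Rightarrow> ('v \<times> 'v) set \<Rightarrow> bool" where
  "leafless V E \<longleftrightarrow> (\<forall>v\<in>V. Chi E v \<noteq> {})"

definition branching_vertices :: "'v set \<Rightarrow> ('v \<times> 'v) set \<Rightarrow> 'v set" where
  "branching_vertices V E = {v \<in> V. card (Chi E v) \<ge> 2}"

definition branching_index :: "'v set \<Rightarrow> ('v \<times> 'v) set \<Rightarrow> enat" where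
  "branching_index V E =
     (if branching_vertices V E = {} then 0
      else 1 + (SUP w\<in>branching_vertices V E. enat (depth V E w)))"

definition finite_branching_index :: "'v set \<Rightarrow> ('v \<times> 'v) set \<Rightarrow> bool" where
  "finite_branching_index V E \<longleftrightarrow> branching_index V E < \<infinity>"

definition iso_to_nat :: "'v set \<Rightarrow> ('v \<times> 'v) set \<Rightarrow> bool" where
  "iso_to_nat V E \<longleftrightarrow> (\<exists>f. bij_betw f V (UNIV :: nat set) \<and>
      (\<forall>u\<in>V. \<forall>v\<in>V. (u, v) \<in> E \<longleftrightarrow> f v = f u + 1))"

definition l2 :: "'a set \<Rightarrow> ('a \<Rightarrow> complex) set" where
  "l2 A = {f. (\<forall>x. x \<notin> A \<longrightarrow> f x = 0) \<and> (\<lambda>x. (cmod (f x))\<^sup>2) summable_on A}"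

definition l2norm :: "'a set \<Rightarrow> ('a \<Rightarrow> complex) \<Rightarrow> real" where
  "l2norm A f = sqrt (\<Sum>\<^sub>\<infinity>x\<in>A. (cmod (f x))\<^sup>2)"

definition unitary_between ::
  "'a set \<Rightarrow> 'b set \<Rightarrow> (('a \<Rightarrow> complex) \<Rightarrow> ('b \<Rightarrow> complex)) \<Rightarrow> bool" where
  "unitary_between A B U \<longleftrightarrow>
     bij_betw U (l2 A) (l2 B) \<and>
     (\<forall>f\<in>l2 A. \<forall>g\<in>l2 A. \<forall>c::complex.
        U (\<lambda>x. c * f x + g x) = (\<lambda>y. c * U f y + U g y)) \<and>
     (\<forall>f\<in>l2 A. l2norm B (U f) = l2norm A f)"

definition unitarily_equivalent ::
  "'a set \<Rightarrow> (('a \<Rightarrow> complex) \<Rightarrow> ('a \<Rightarrow> complex)) \<Rightarrow>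
   'b set \<Rightarrow> (('b \<Rightarrow> complex) \<Rightarrow> ('b \<Rightarrow> complex)) \<Rightarrow> bool" where
  "unitarily_equivalent A S B T \<longleftrightarrow>
     (\<exists>U. unitary_between A B U \<and> (\<forall>f\<in>l2 A. U (S f) = T (U f)))"

definition dirichlet_weight :: "'v set \<Rightarrow> ('v \<times> 'v) set \<Rightarrow> real \<Rightarrow> 'v \<Rightarrow> real" where
  "dirichlet_weight V E q u =
     (let v = parent E u in
        (1 / sqrt (real (card (Chi E v)))) *
        sqrt ((real (depth V E v) + q) / (real (depth V E v) + 1)))"

text \<open>Weighted shift S_lambda e_v = sum over u in Chi(v) of lambda_u e_u, i.e.
  (S_lambda f)(u) = lambda_u f(parent u) for u not the root, and 0 at the root.\<close>
definition weighted_shift ::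
  "'v set \<Rightarrow> ('v \<times> 'v) set \<Rightarrow> ('v \<Rightarrow> real) \<Rightarrow> ('v \<Rightarrow> complex) \<Rightarrow> ('v \<Rightarrow> complex)" where
  "weighted_shift V E lam f =
     (\<lambda>u. if u \<in> V \<and> has_parent E u then complex_of_real (lam u) * f (parent E u) else 0)"

definition dirichlet_shift ::
  "'v set \<Rightarrow> ('v \<times> 'v) set \<Rightarrow> real \<Rightarrow> ('v \<Rightarrow> complex) \<Rightarrow> ('v \<Rightarrow> complex)" where
  "dirichlet_shift V E q = weighted_shift V E (dirichlet_weight V E q)"

text \<open>Orthogonal direct sum of m copies of the classical Dirichlet shift
  S_{w,q} e_n = sqrt((n+q)/(n+1)) e_{n+1} on l2(N), realised on l2({..<m} x N).\<close>
definition classical_dirichlet_sum ::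
  "nat \<Rightarrow> real \<Rightarrow> (nat \<times> nat \<Rightarrow> complex) \<Rightarrow> (nat \<times> nat \<Rightarrow> complex)" where
  "classical_dirichlet_sum m q g =
     (\<lambda>(j, n). if j < m \<and> n > 0
        then complex_of_real (sqrt ((real (n - 1) + q) / (real (n - 1) + 1))) * g (j, n - 1)
        else 0)"

end

theory Submission
  imports Defs "HOL-Library.Function_Algebras"
begin

interpretation fvs: vector_space "\<lambda>(c::complex) (f::'a \<Rightarrow> complex) x. c * f x"
  by unfold_locales (auto simp: fun_eq_iff algebra_simps)

lemma sum_fun_apply: "(\<Sum>v\<in>A. g v) x = (\<Sum>v\<in>A. g v x)"
  by (induction A rule: infinite_finite_induct) auto

definition ip :: "'a set \<Rightarrow> ('a \<Rightarrow> complex) \<Rightarrow> ('a \<Rightarrow> complex) \<Rightarrow> complex" where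
  "ip X f g = (\<Sum>x\<in>X. f x * cnj (g x))"

definition onb :: "'a set \<Rightarrow> (nat \<Rightarrow> 'a \<Rightarrow> complex) \<Rightarrow> nat \<Rightarrow> bool" where
  "onb X b d \<longleftrightarrow> (\<forall>i<d. \<forall>x. x \<notin> X \<longrightarrow> b i x = 0) \<and>
     (\<forall>i<d. \<forall>j<d. ip X (b i) (b j) = (if i = j then 1 else 0))"

definition dl :: "'a \<Rightarrow> 'a \<Rightarrow> complex" where "dl x = (\<lambda>y. if y = x then 1 else 0)"

lemma ip_sum_left: "ip X (\<Sum>i\<in>I. (\<lambda>x. c i * h i x)) w = (\<Sum>i\<in>I. c i * ip X (h i) w)"
  unfolding ip_def sum_fun_apply by (simp add: sum_distrib_right sum_distrib_left mult.assoc sum.swap[of _ X])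

lemma ip_cong: "(\<And>x. x \<in> X \<Longrightarrow> f x = g x) \<Longrightarrow> ip X f w = ip X g w"
  unfolding ip_def by simp

lemma ip_self: "ip X f f = complex_of_real (\<Sum>x\<in>X. (cmod (f x))\<^sup>2)"
  unfolding ip_def of_real_sum by (simp only: complex_norm_square)

lemma onb_inj: assumes "onb X b d" shows "inj_on b {..<d}"
proof (rule inj_onI)
  fix i j assume ij: "i \<in> {..<d}" "j \<in> {..<d}" "b i = b j"
  show "i = j"
  proof (rule ccontr)
    assume "i \<noteq> j"
    have "ip X (b i) (b i) = 1" using assms ij unfolding onb_def by auto
    moreover have "ip X (b i) (b j) = 0" using assms ij(1,2) \<open>i \<noteq> j\<close> unfolding onb_def by auto
    moreover have "ip X (b i) (b j) = ip X (b i) (b i)" using ij(3) by simp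
    ultimately show False by simp
  qed
qed

lemma onb_indep: assumes "onb X b d" shows "fvs.independent (b ` {..<d})"
proof (rule fvs.independent_if_scalars_zero)
  show "finite (b ` {..<d})" by simp
  fix u v assume s: "(\<Sum>x\<in>b ` {..<d}. (\<lambda>y. u x * x y)) = 0" and v: "v \<in> b ` {..<d}"
  then obtain j where j: "j < d" "v = b j" by auto
  have inj: "inj_on b {..<d}" using onb_inj[OF assms] .
  have "0 = ip X (\<Sum>x\<in>b ` {..<d}. (\<lambda>y. u x * x y)) (b j)" using s by (simp add: ip_def)
  also have "\<dots> = (\<Sum>x\<in>b ` {..<d}. u x * ip X x (b j))" by (rule ip_sum_left)
  also have "\<dots> = (\<Sum>i<d. u (b i) * ip X (b i) (b j))" by (simp add: sum.reindex[OF inj])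
  also have "\<dots> = (\<Sum>i<d. if i = j then u (b i) else 0)"
    using assms j by (intro sum.cong) (auto simp: onb_def)
  also have "\<dots> = u v" using j by simp
  finally show "u v = 0" by simp
qed

lemma supp_in_span:
  assumes "finite X" "\<And>y. y \<notin> X \<Longrightarrow> g y = 0"
  shows "g \<in> fvs.span (dl ` X)"
proof -
  have eq: "g y = (\<Sum>x\<in>X. g x * dl x y)" for y
  proof -
    have "(\<Sum>x\<in>X. g x * dl x y) = (\<Sum>x\<in>X. if x = y then g x else 0)"
      by (intro sum.cong) (auto simp: dl_def)
    also have "\<dots> = g y" using assms by (auto simp: sum.delta')
    finally show ?thesis by simp
  qed
  have "g = (\<Sum>x\<in>X. (\<lambda>y. g x * dl x y))"
    by (rule ext) (simp only: sum_fun_apply, rule eq)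
  also have "\<dots> \<in> fvs.span (dl ` X)"
    by (intro fvs.span_sum fvs.span_scale fvs.span_base) auto
  finally show ?thesis .
qed

lemma card_dl: "card (dl ` X) = card X"
proof -
  have "inj_on dl X" by (auto simp: inj_on_def dl_def fun_eq_iff split: if_splits)
  then show ?thesis by (rule card_image)
qed

lemma dl_indep: assumes "finite X" shows "fvs.independent (dl ` X)"
proof (rule fvs.independent_if_scalars_zero)
  show "finite (dl ` X)" using assms by simp
  fix u v assume s: "(\<Sum>x\<in>dl ` X. (\<lambda>y. u x * x y)) = 0" and v: "v \<in> dl ` X"
  then obtain z where z: "z \<in> X" "v = dl z" by auto
  have inj: "inj_on dl X" by (auto simp: inj_on_def dl_def fun_eq_iff split: if_splits)
  have "0 = (\<Sum>x\<in>dl ` X. (\<lambda>y. u x * x y)) z" using s by simp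
  also have "\<dots> = (\<Sum>x\<in>X. u (dl x) * dl x z)" by (simp add: sum_fun_apply sum.reindex[OF inj])
  also have "\<dots> = (\<Sum>x\<in>X. if x = z then u (dl x) else 0)" by (intro sum.cong) (auto simp: dl_def)
  also have "\<dots> = u v" using z assms by simp
  finally show "u v = 0" by simp
qed

lemma onb_le_card: assumes "finite X" "onb X b d" shows "d \<le> card X"
proof -
  have "b ` {..<d} \<subseteq> fvs.span (dl ` X)"
    using assms by (auto intro!: supp_in_span simp: onb_def)
  then have "card (b ` {..<d}) \<le> card (dl ` X)"
    using fvs.independent_span_bound[OF _ onb_indep[OF assms(2)]] assms(1) by auto
  then show ?thesis using card_image[OF onb_inj[OF assms(2)]] card_dl[of X] by simp
qed

lemma onb_complete:
  assumes X: "finite X" and b: "onb X b (card X)" and x: "x \<in> X"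
  shows "f x = (\<Sum>i<card X. ip X f (b i) * b i x)"
proof -
  define n where "n = card X"
  define B where "B = b ` {..<n}"
  define g where "g = (\<lambda>y. if y \<in> X then f y else 0)"
  have inj: "inj_on b {..<n}" using onb_inj[OF b] n_def by simp
  have cB: "card B = n" unfolding B_def using card_image[OF inj] by simp
  have ind: "fvs.independent B" unfolding B_def n_def by (rule onb_indep[OF b])
  have gspan: "g \<in> fvs.span B"
  proof (rule ccontr)
    assume ns: "g \<notin> fvs.span B"
    then have gB: "g \<notin> B" using fvs.span_base by blast
    have "fvs.independent (insert g B)" using fvs.independent_insertI[OF ns ind] .
    moreover have "insert g B \<subseteq> fvs.span (dl ` X)"
      using b X unfolding B_def n_def onb_def g_def by (auto intro!: supp_in_span)
    ultimately have "card (insert g B) \<le> card (dl ` X)"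
      using fvs.independent_span_bound[of "dl ` X" "insert g B"] X by auto
    then show False using gB cB card_dl[of X] n_def by (simp add: B_def)
  qed
  then obtain u where u: "g = (\<Sum>v\<in>B. (\<lambda>y. u v * v y))"
    using fvs.span_finite[of B] B_def by auto
  have g2: "g = (\<Sum>i<n. (\<lambda>y. u (b i) * b i y))"
    using u unfolding B_def by (simp add: sum.reindex[OF inj])
  have coef: "ip X f (b j) = u (b j)" if j: "j < n" for j
  proof -
    have "ip X f (b j) = ip X g (b j)" by (rule ip_cong) (simp add: g_def)
    also have "\<dots> = (\<Sum>i<n. u (b i) * ip X (b i) (b j))" unfolding g2 by (rule ip_sum_left)
    also have "\<dots> = (\<Sum>i<n. if i = j then u (b i) else 0)"
      using b j n_def by (intro sum.cong) (auto simp: onb_def)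
    also have "\<dots> = u (b j)" using j by simp
    finally show ?thesis .
  qed
  have "f x = g x" using x by (simp add: g_def)
  also have "\<dots> = (\<Sum>i<n. u (b i) * b i x)" unfolding g2 by (simp add: sum_fun_apply)
  also have "\<dots> = (\<Sum>i<n. ip X f (b i) * b i x)" using coef by simp
  finally show ?thesis unfolding n_def .
qed


lemma ip_cnj: "ip X f g = cnj (ip X g f)"
  unfolding ip_def by (simp add: mult.commute)

lemma ip_diff_sum:
  "ip X (\<lambda>y. f y - (\<Sum>i\<in>I. c i * h i y)) w = ip X f w - (\<Sum>i\<in>I. c i * ip X (h i) w)"
  unfolding ip_def by (simp add: left_diff_distrib sum_subtractf sum_distrib_right sum_distrib_left
      mult.assoc sum.swap[of _ X])

lemma ip_scale_left: "ip X (\<lambda>y. f y / c) w = ip X f w / c"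
  unfolding ip_def by (simp add: sum_divide_distrib)

lemma ip_scale_right: "ip X w (\<lambda>y. f y / complex_of_real c) = ip X w f / complex_of_real c"
  unfolding ip_def by (simp add: sum_divide_distrib)

lemma onb_step:
  assumes X: "finite X" and b: "onb X b k" and k: "k < card X"
  shows "\<exists>w. onb X (b(k := w)) (Suc k)"
proof -
  define B where "B = b ` {..<k}"
  have cB: "card B \<le> k" unfolding B_def using card_image_le[of "{..<k}" b] by simp
  obtain x where x: "x \<in> X" "dl x \<notin> fvs.span B"
  proof (rule ccontr)
    assume "\<not> thesis"
    with that have "dl ` X \<subseteq> fvs.span B" by auto
    then have "card (dl ` X) \<le> card B"
      using fvs.independent_span_bound[OF _ dl_indep[OF X]] B_def by auto
    then show False using cB k card_dl[of X] by simp
  qed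
  define c where "c i = ip X (dl x) (b i)" for i
  define v where "v = (\<lambda>y. dl x y - (\<Sum>i<k. c i * b i y))"
  have vsupp: "v y = 0" if "y \<notin> X" for y
    using that x b unfolding v_def onb_def dl_def by auto
  have vnz: "\<exists>y. v y \<noteq> 0"
  proof (rule ccontr)
    assume "\<not> ?thesis"
    then have "dl x = (\<Sum>i<k. (\<lambda>y. c i * b i y))"
      unfolding v_def by (auto simp: fun_eq_iff sum_fun_apply)
    also have "\<dots> \<in> fvs.span B"
      unfolding B_def by (intro fvs.span_sum fvs.span_scale fvs.span_base) auto
    finally show False using x by simp
  qed
  then obtain y0 where y0: "v y0 \<noteq> 0" by auto
  have y0X: "y0 \<in> X" using vsupp y0 by blast
  define r where "r = (\<Sum>y\<in>X. (cmod (v y))\<^sup>2)"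
  have rpos: "r > 0"
    unfolding r_def using y0 y0X X by (intro sum_pos2[of X y0]) auto
  have vv: "ip X v v = complex_of_real r" unfolding r_def by (rule ip_self)
  have vb: "ip X v (b j) = 0" if j: "j < k" for j
  proof -
    have "ip X v (b j) = ip X (dl x) (b j) - (\<Sum>i<k. c i * ip X (b i) (b j))"
      unfolding v_def by (rule ip_diff_sum)
    also have "(\<Sum>i<k. c i * ip X (b i) (b j)) = (\<Sum>i<k. if i = j then c i else 0)"
      using b j by (intro sum.cong) (auto simp: onb_def)
    also have "\<dots> = c j" using j by simp
    finally show ?thesis by (simp add: c_def)
  qed
  define w where "w = (\<lambda>y. v y / complex_of_real (sqrt r))"
  have ww: "ip X w w = 1"
  proof -
    have "ip X w w = ip X v v / complex_of_real (sqrt r) / complex_of_real (sqrt r)"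
      unfolding w_def by (simp add: ip_scale_left ip_scale_right)
    also have "\<dots> = 1" using rpos vv
      by (simp add: field_simps flip: of_real_mult)
    finally show ?thesis .
  qed
  have wb: "ip X w (b j) = 0" if "j < k" for j
    unfolding w_def ip_scale_left using vb[OF that] by simp
  have bw: "ip X (b j) w = 0" if "j < k" for j
    using wb[OF that] ip_cnj[of X "b j" w] by simp
  have "onb X (b(k := w)) (Suc k)"
    unfolding onb_def
  proof (intro conjI allI impI)
    fix i y assume "i < Suc k" "y \<notin> X"
    then show "(b(k := w)) i y = 0" using b vsupp unfolding onb_def w_def by (cases "i = k") auto
  next
    fix i j assume i: "i < Suc k" and j: "j < Suc k"
    show "ip X ((b(k := w)) i) ((b(k := w)) j) = (if i = j then 1 else 0)"
      using b i j ww wb bw unfolding onb_def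
      by (cases "i = k"; cases "j = k") (auto simp: less_Suc_eq)
  qed
  then show ?thesis by blast
qed

lemma onb_extend_aux:
  assumes X: "finite X"
  shows "onb X b k \<Longrightarrow> k \<le> card X \<Longrightarrow> card X - k = n \<Longrightarrow>
         \<exists>b'. onb X b' (card X) \<and> (\<forall>i<k. b' i = b i)"
proof (induction n arbitrary: b k)
  case 0
  then have "k = card X" by simp
  then show ?case using 0 by blast
next
  case (Suc n)
  then have k: "k < card X" by simp
  obtain w where w: "onb X (b(k := w)) (Suc k)" using onb_step[OF X Suc.prems(1) k] by blast
  have n: "card X - Suc k = n" using Suc.prems(3) k by simp
  obtain b' where b': "onb X b' (card X)" "\<forall>i<Suc k. b' i = (b(k := w)) i"
    using Suc.IH[OF w Suc_leI[OF k] n] by blast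
  then show ?case by auto
qed

lemma onb_extend:
  assumes "finite X" "onb X b k" "k \<le> card X"
  shows "\<exists>b'. onb X b' (card X) \<and> (\<forall>i<k. b' i = b i)"
  using onb_extend_aux[OF assms(1,2,3)] by blast


lemma part_sum:
  fixes g :: "'a \<Rightarrow> real"
  assumes fin: "\<And>n. finite (L n)" and A: "A = (\<Union>n. L n)" and disj: "disjoint_family L"
    and nn: "\<And>x. g x \<ge> 0"
  shows "g summable_on A \<longleftrightarrow> (\<lambda>n. sum g (L n)) summable_on UNIV"
    and "infsum g A = infsum (\<lambda>n. sum g (L n)) UNIV"
proof -
  have hs: "\<And>n. n \<in> UNIV \<Longrightarrow> (g has_sum sum g (L n)) (L n)" using fin by simp
  show 1: "g summable_on A \<longleftrightarrow> (\<lambda>n. sum g (L n)) summable_on UNIV"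
    unfolding A using summable_on_Union_iff[where A=UNIV and f=g and g="\<lambda>n. sum g (L n)" and B=L] hs nn disj
    by (auto simp: disjoint_family_on_def)
  show "infsum g A = infsum (\<lambda>n. sum g (L n)) UNIV"
  proof (cases "g summable_on A")
    case True
    then have "(g has_sum infsum g A) A" by (rule has_sum_infsum)
    moreover have inj: "inj_on snd (Sigma UNIV L)"
      using disj by (auto simp: inj_on_def disjoint_family_on_def)
    moreover have "snd ` (Sigma UNIV L) = A" unfolding A by force
    ultimately have "((g \<circ> snd) has_sum infsum g A) (Sigma UNIV L)"
      using has_sum_reindex[OF inj, of g] by simp
    then have "((\<lambda>n. sum g (L n)) has_sum infsum g A) UNIV"
      by (rule has_sum_SigmaD) (use fin in auto)
    then show ?thesis by (simp add: infsumI)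
  next
    case False
    with 1 show ?thesis by (simp add: infsum_not_exists)
  qed
qed

definition gshift :: "('a \<Rightarrow> bool) \<Rightarrow> ('a \<Rightarrow> real) \<Rightarrow> ('a \<Rightarrow> 'a) \<Rightarrow> ('a \<Rightarrow> complex) \<Rightarrow> ('a \<Rightarrow> complex)" where
  "gshift R w p f = (\<lambda>x. if R x then complex_of_real (w x) * f (p x) else 0)"

definition lev :: "'a set \<Rightarrow> ('a \<Rightarrow> nat) \<Rightarrow> nat \<Rightarrow> 'a set" where
  "lev A la n = {x\<in>A. la x = n}"

lemma lev_union: "A = (\<Union>n. lev A la n)" unfolding lev_def by auto
lemma lev_disj: "disjoint_family (lev A la)" unfolding lev_def disjoint_family_on_def by auto

lemma gshift_sum: "gshift R w p (\<Sum>k\<in>K. (\<lambda>x. a k * h k x)) = (\<Sum>k\<in>K. (\<lambda>x. a k * gshift R w p (h k) x))"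
  unfolding gshift_def by (auto simp: fun_eq_iff sum_fun_apply sum_distrib_left algebra_simps)

lemma gshift_lin: "gshift R w p (\<lambda>x. k * f x + g x) = (\<lambda>x. k * gshift R w p f x + gshift R w p g x)"
  unfolding gshift_def by (auto simp: fun_eq_iff algebra_simps)

locale gforest =
  fixes A :: "'a set" and la :: "'a \<Rightarrow> nat" and R :: "'a \<Rightarrow> bool" and w :: "'a \<Rightarrow> real"
    and p :: "'a \<Rightarrow> 'a" and c :: "nat \<Rightarrow> real"
  assumes fin: "finite (lev A la n)"
    and R_A: "R x \<Longrightarrow> x \<in> A \<and> p x \<in> A \<and> la x = Suc (la (p x))"
    and wsum: "v \<in> A \<Longrightarrow> (\<Sum>x\<in>{x. R x \<and> p x = v}. (w x)\<^sup>2) = (c (la v))\<^sup>2"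
begin

abbreviation "S \<equiv> gshift R w p"

lemma S_out: "x \<notin> A \<Longrightarrow> S f x = 0"
  unfolding gshift_def using R_A by auto

lemma S_lev0: "la x = 0 \<Longrightarrow> S f x = 0"
  unfolding gshift_def using R_A by fastforce

lemma S_local: "x \<in> lev A la (Suc n) \<Longrightarrow> (\<And>y. y \<in> lev A la n \<Longrightarrow> f y = g y) \<Longrightarrow> S f x = S g x"
  unfolding gshift_def lev_def using R_A by auto

lemma S_supp: assumes "\<And>y. y \<notin> lev A la n \<Longrightarrow> f y = 0" "x \<notin> lev A la (Suc n)" shows "S f x = 0"
proof (cases "R x")
  case True
  then have "p x \<notin> lev A la n" using R_A[of x] assms(2) by (auto simp: lev_def)
  then show ?thesis using assms(1) by (simp add: gshift_def)
qed (simp add: gshift_def)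

lemma ip_shift: "ip (lev A la (Suc n)) (S f) (S g) = complex_of_real ((c n)\<^sup>2) * ip (lev A la n) f g"
proof -
  let ?L = "lev A la (Suc n)" and ?K = "lev A la n"
  have ch_fin: "finite {x. R x \<and> p x = v}" if "v \<in> ?K" for v
    by (rule finite_subset[OF _ fin[of "Suc n"]]) (use that R_A in \<open>auto simp: lev_def\<close>)
  have "ip ?L (S f) (S g) = (\<Sum>x\<in>{x\<in>?L. R x}. S f x * cnj (S g x))"
    unfolding ip_def by (rule sum.mono_neutral_right) (auto simp: fin gshift_def intro: finite_subset[OF _ fin[of "Suc n"]])
  also have "\<dots> = (\<Sum>v\<in>?K. \<Sum>x\<in>{x\<in>{x\<in>?L. R x}. p x = v}. S f x * cnj (S g x))"
  proof (rule sum.group[symmetric])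
    show "finite {x\<in>?L. R x}" by (rule finite_subset[OF _ fin[of "Suc n"]]) auto
  qed (use fin R_A in \<open>auto simp: lev_def\<close>)
  also have "\<dots> = (\<Sum>v\<in>?K. \<Sum>x\<in>{x. R x \<and> p x = v}. complex_of_real ((w x)\<^sup>2) * (f v * cnj (g v)))"
  proof (rule sum.cong[OF refl], rule sum.cong)
    fix v assume "v \<in> ?K"
    then show "{x\<in>{x\<in>?L. R x}. p x = v} = {x. R x \<and> p x = v}" using R_A by (auto simp: lev_def)
  next
    fix v x assume "x \<in> {x. R x \<and> p x = v}"
    then show "S f x * cnj (S g x) = complex_of_real ((w x)\<^sup>2) * (f v * cnj (g v))"
      by (simp add: gshift_def power2_eq_square)
  qed
  also have "\<dots> = (\<Sum>v\<in>?K. complex_of_real ((c n)\<^sup>2) * (f v * cnj (g v)))"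
  proof (rule sum.cong[OF refl])
    fix v assume v: "v \<in> ?K"
    have "(\<Sum>x\<in>{x. R x \<and> p x = v}. complex_of_real ((w x)\<^sup>2) * (f v * cnj (g v)))
        = complex_of_real (\<Sum>x\<in>{x. R x \<and> p x = v}. (w x)\<^sup>2) * (f v * cnj (g v))"
      by (simp add: sum_distrib_right)
    also have "\<dots> = complex_of_real ((c n)\<^sup>2) * (f v * cnj (g v))"
      using wsum[of v] v by (simp add: lev_def)
    finally show "(\<Sum>x\<in>{x. R x \<and> p x = v}. complex_of_real ((w x)\<^sup>2) * (f v * cnj (g v)))
        = complex_of_real ((c n)\<^sup>2) * (f v * cnj (g v))" .
  qed
  also have "\<dots> = complex_of_real ((c n)\<^sup>2) * ip ?K f g"
    unfolding ip_def by (simp add: sum_distrib_left)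
  finally show ?thesis .
qed

lemma lev_norm_shift: "(\<Sum>x\<in>lev A la (Suc n). (cmod (S f x))\<^sup>2) = (c n)\<^sup>2 * (\<Sum>x\<in>lev A la n. (cmod (f x))\<^sup>2)"
proof -
  have "complex_of_real (\<Sum>x\<in>lev A la (Suc n). (cmod (S f x))\<^sup>2) = complex_of_real ((c n)\<^sup>2 * (\<Sum>x\<in>lev A la n. (cmod (f x))\<^sup>2))"
    using ip_shift[of n f f] by (simp only: ip_self of_real_mult)
  then show ?thesis by (simp only: of_real_eq_iff)
qed

lemma lev_norm_shift0: "(\<Sum>x\<in>lev A la 0. (cmod (S f x))\<^sup>2) = 0"
  by (rule sum.neutral) (auto simp: lev_def S_lev0)

end


lemma ip_scale_left': "ip X (\<lambda>x. k * g x) h = k * ip X g h"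
  unfolding ip_def by (simp add: sum_distrib_left mult.assoc)

lemma ip_sum_right: "ip X f (\<Sum>i\<in>I. (\<lambda>x. a i * h i x)) = (\<Sum>i\<in>I. cnj (a i) * ip X f (h i))"
proof -
  have "ip X f (\<Sum>i\<in>I. (\<lambda>x. a i * h i x)) = cnj (ip X (\<Sum>i\<in>I. (\<lambda>x. a i * h i x)) f)"
    by (rule ip_cnj)
  also have "\<dots> = cnj (\<Sum>i\<in>I. a i * ip X (h i) f)" by (simp only: ip_sum_left)
  also have "\<dots> = (\<Sum>i\<in>I. cnj (a i) * ip X f (h i))" by (simp add: ip_cnj[of X f])
  finally show ?thesis .
qed

lemma ip_cong2: "(\<And>x. x \<in> X \<Longrightarrow> f x = f' x) \<Longrightarrow> (\<And>x. x \<in> X \<Longrightarrow> g x = g' x) \<Longrightarrow> ip X f g = ip X f' g'"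
  unfolding ip_def by simp

lemma ip_lin: "ip X (\<lambda>x. k * f x + g x) h = k * ip X f h + ip X g h"
  unfolding ip_def by (simp add: sum.distrib sum_distrib_left algebra_simps)

lemma onb_delta_sum:
  assumes "onb X b d" "i < d"
  shows "(\<Sum>k<d. a k * ip X (b k) (b i)) = a i"
proof -
  have "(\<Sum>k<d. a k * ip X (b k) (b i)) = (\<Sum>k<d. if k = i then a k else 0)"
    using assms by (intro sum.cong) (auto simp: onb_def)
  also have "\<dots> = a i" using assms(2) by simp
  finally show ?thesis .
qed

definition xfer :: "'a set \<Rightarrow> ('a \<Rightarrow> nat) \<Rightarrow> 'b set \<Rightarrow> ('b \<Rightarrow> nat) \<Rightarrow> (nat \<Rightarrow> nat \<Rightarrow> 'a \<Rightarrow> complex)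
   \<Rightarrow> (nat \<Rightarrow> nat \<Rightarrow> 'b \<Rightarrow> complex) \<Rightarrow> (nat \<Rightarrow> nat) \<Rightarrow> ('a \<Rightarrow> complex) \<Rightarrow> ('b \<Rightarrow> complex)" where
  "xfer X la Y lb \<beta> \<gamma> d f = (\<lambda>y. if y \<in> Y then
      (\<Sum>i<d (lb y). ip (lev X la (lb y)) f (\<beta> (lb y) i) * \<gamma> (lb y) i y) else 0)"

locale bpair =
  fixes X :: "'a set" and la :: "'a \<Rightarrow> nat" and Y :: "'b set" and lb :: "'b \<Rightarrow> nat"
    and \<beta> :: "nat \<Rightarrow> nat \<Rightarrow> 'a \<Rightarrow> complex" and \<gamma> :: "nat \<Rightarrow> nat \<Rightarrow> 'b \<Rightarrow> complex" and d :: "nat \<Rightarrow> nat"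
  assumes finX: "finite (lev X la n)" and finY: "finite (lev Y lb n)"
    and dX: "card (lev X la n) = d n" and dY: "card (lev Y lb n) = d n"
    and oX: "onb (lev X la n) (\<beta> n) (d n)" and oY: "onb (lev Y lb n) (\<gamma> n) (d n)"
begin

abbreviation "U \<equiv> xfer X la Y lb \<beta> \<gamma> d"

lemma sym: "bpair Y lb X la \<gamma> \<beta> d"
  by unfold_locales (auto simp: finX finY dX dY oX oY)

lemma U_lev: "y \<in> lev Y lb n \<Longrightarrow> U f y = (\<Sum>i<d n. ip (lev X la n) f (\<beta> n i) * \<gamma> n i y)"
  unfolding xfer_def lev_def by auto

lemma U_out: "y \<notin> Y \<Longrightarrow> U f y = 0"
  unfolding xfer_def by auto

lemma U_lev_fun: "ip (lev Y lb n) (U f) h = ip (lev Y lb n) (\<Sum>i<d n. (\<lambda>y. ip (lev X la n) f (\<beta> n i) * \<gamma> n i y)) h"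
  by (rule ip_cong) (simp add: U_lev sum_fun_apply)

lemma coef: "i < d n \<Longrightarrow> ip (lev Y lb n) (U f) (\<gamma> n i) = ip (lev X la n) f (\<beta> n i)"
  unfolding U_lev_fun ip_sum_left using onb_delta_sum[OF oY] by simp

lemma complete_X: "x \<in> lev X la n \<Longrightarrow> f x = (\<Sum>i<d n. ip (lev X la n) f (\<beta> n i) * \<beta> n i x)"
  using onb_complete[OF finX, where b="\<beta> n" and x=x and f=f] oX dX by simp

lemma complete_Y: "y \<in> lev Y lb n \<Longrightarrow> g y = (\<Sum>i<d n. ip (lev Y lb n) g (\<gamma> n i) * \<gamma> n i y)"
  using onb_complete[OF finY, where b="\<gamma> n" and x=y and f=g] oY dY by simp

lemma lev_norm: "(\<Sum>y\<in>lev Y lb n. (cmod (U f y))\<^sup>2) = (\<Sum>x\<in>lev X la n. (cmod (f x))\<^sup>2)"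
proof -
  define a where "a i = ip (lev X la n) f (\<beta> n i)" for i
  have "ip (lev Y lb n) (U f) (U f) = ip (lev Y lb n) (U f) (\<Sum>i<d n. (\<lambda>y. a i * \<gamma> n i y))"
    by (rule ip_cong2) (simp_all add: U_lev sum_fun_apply a_def)
  also have "\<dots> = (\<Sum>i<d n. cnj (a i) * a i)"
    unfolding ip_sum_right by (intro sum.cong) (simp_all add: coef a_def)
  finally have 1: "ip (lev Y lb n) (U f) (U f) = (\<Sum>i<d n. cnj (a i) * a i)" .
  have "ip (lev X la n) f f = ip (lev X la n) f (\<Sum>i<d n. (\<lambda>x. a i * \<beta> n i x))"
    by (rule ip_cong2) (simp_all add: sum_fun_apply a_def flip: complete_X)
  also have "\<dots> = (\<Sum>i<d n. cnj (a i) * a i)"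
    unfolding ip_sum_right by (simp add: a_def)
  finally have 2: "ip (lev X la n) f f = (\<Sum>i<d n. cnj (a i) * a i)" .
  from 1 2 have "complex_of_real (\<Sum>y\<in>lev Y lb n. (cmod (U f y))\<^sup>2) = complex_of_real (\<Sum>x\<in>lev X la n. (cmod (f x))\<^sup>2)"
    by (simp only: ip_self)
  then show ?thesis by (simp only: of_real_eq_iff)
qed

lemma U_l2:
  assumes f: "f \<in> l2 X"
  shows "U f \<in> l2 Y" "l2norm Y (U f) = l2norm X f"
proof -
  let ?g = "\<lambda>x. (cmod (f x))\<^sup>2" and ?h = "\<lambda>y. (cmod (U f y))\<^sup>2"
  have sX: "?g summable_on X \<longleftrightarrow> (\<lambda>n. sum ?g (lev X la n)) summable_on UNIV"
    and iX: "infsum ?g X = infsum (\<lambda>n. sum ?g (lev X la n)) UNIV"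
    using part_sum[OF finX lev_union lev_disj] by auto
  have sY: "?h summable_on Y \<longleftrightarrow> (\<lambda>n. sum ?h (lev Y lb n)) summable_on UNIV"
    and iY: "infsum ?h Y = infsum (\<lambda>n. sum ?h (lev Y lb n)) UNIV"
    using part_sum[OF finY lev_union lev_disj] by auto
  have eq: "(\<lambda>n. sum ?h (lev Y lb n)) = (\<lambda>n. sum ?g (lev X la n))"
    using lev_norm by auto
  show "U f \<in> l2 Y" using f sX sY eq unfolding l2_def by (auto simp: U_out)
  show "l2norm Y (U f) = l2norm X f" unfolding l2norm_def using iX iY eq by simp
qed

lemma U_lin: "U (\<lambda>x. k * f x + g x) = (\<lambda>y. k * U f y + U g y)"
  by (rule ext) (simp add: xfer_def ip_lin distrib_right sum.distrib sum_distrib_left mult.assoc)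

end

lemma bpair_inverse:
  assumes "bpair X la Y lb \<beta> \<gamma> d" and g: "\<And>y. y \<notin> Y \<Longrightarrow> g y = 0"
  shows "xfer X la Y lb \<beta> \<gamma> d (xfer Y lb X la \<gamma> \<beta> d g) = g"
proof (rule ext)
  interpret b1: bpair X la Y lb \<beta> \<gamma> d by fact
  interpret b2: bpair Y lb X la \<gamma> \<beta> d by (rule b1.sym)
  fix y show "xfer X la Y lb \<beta> \<gamma> d (xfer Y lb X la \<gamma> \<beta> d g) y = g y"
  proof (cases "y \<in> Y")
    case True
    define n where "n = lb y"
    have y: "y \<in> lev Y lb n" using True by (simp add: lev_def n_def)
    have "xfer X la Y lb \<beta> \<gamma> d (xfer Y lb X la \<gamma> \<beta> d g) y
        = (\<Sum>i<d n. ip (lev X la n) (xfer Y lb X la \<gamma> \<beta> d g) (\<beta> n i) * \<gamma> n i y)"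
      by (rule b1.U_lev[OF y])
    also have "\<dots> = (\<Sum>i<d n. ip (lev Y lb n) g (\<gamma> n i) * \<gamma> n i y)"
      by (intro sum.cong) (simp_all add: b2.coef)
    also have "\<dots> = g y" using b1.complete_Y[OF y, of g] by simp
    finally show ?thesis .
  qed (simp add: g b1.U_out)
qed


lemma onb_zero: "onb X b 0" by (simp add: onb_def)

lemma onb_delta_sum2:
  assumes "onb X b D" "K \<le> D" "i < D"
  shows "(\<Sum>k<K. a k * ip X (b k) (b i)) = (if i < K then a i else 0)"
proof -
  have "(\<Sum>k<K. a k * ip X (b k) (b i)) = (\<Sum>k<K. if k = i then a k else 0)"
    using assms by (intro sum.cong) (auto simp: onb_def)
  also have "\<dots> = (if i < K then a i else 0)" by simp
  finally show ?thesis .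
qed

lemma sum_if_less:
  assumes "K \<le> (D::nat)" shows "(\<Sum>i<D. if i < K then g i else 0) = (\<Sum>i<K. g i)"
proof -
  have "(\<Sum>i<D. if i < K then g i else 0) = (\<Sum>i<D. if i \<in> {..<K} then g i else 0)" by simp
  have "{..<D} \<inter> {i. i < K} = {..<K}" using assms by auto
  then show ?thesis by (simp add: sum.If_cases)
qed

context gforest begin

lemma onb_shift:
  assumes b: "onb (lev A la n) b k" and cn: "c n \<noteq> 0"
  shows "onb (lev A la (Suc n)) (\<lambda>i x. S (b i) x / complex_of_real (c n)) k"
  unfolding onb_def
proof (intro conjI allI impI)
  fix i x assume "i < k" "x \<notin> lev A la (Suc n)"
  then show "S (b i) x / complex_of_real (c n) = 0"
    using S_supp[of n "b i" x] b by (auto simp: onb_def)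
next
  fix i j assume ij: "i < k" "j < k"
  have "ip (lev A la (Suc n)) (\<lambda>x. S (b i) x / complex_of_real (c n)) (\<lambda>x. S (b j) x / complex_of_real (c n))
      = ip (lev A la (Suc n)) (S (b i)) (S (b j)) / complex_of_real (c n) / complex_of_real (c n)"
    by (simp only: ip_scale_left ip_scale_right)
  also have "\<dots> = ip (lev A la n) (b i) (b j)"
    using cn by (simp add: ip_shift power2_eq_square)
  also have "\<dots> = (if i = j then 1 else 0)" using b ij by (simp add: onb_def)
  finally show "ip (lev A la (Suc n)) (\<lambda>x. S (b i) x / complex_of_real (c n)) (\<lambda>x. S (b j) x / complex_of_real (c n)) = (if i = j then 1 else 0)" .
qed

end

theorem gequiv:
  assumes GA: "gforest A la RA wA pA c" and GB: "gforest B lb RB wB pB c"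
    and cnz: "\<And>n. c n \<noteq> 0"
    and card: "\<And>n. card (lev A la n) = card (lev B lb n)"
  shows "\<exists>U. unitary_between A B U \<and> (\<forall>f. U (gshift RA wA pA f) = gshift RB wB pB (U f))"
proof -
  interpret a: gforest A la RA wA pA c by (rule GA)
  interpret b: gforest B lb RB wB pB c by (rule GB)
  define d where "d n = card (lev A la n)" for n
  define P where "P n bg \<longleftrightarrow> onb (lev A la n) (fst bg) (d n) \<and> onb (lev B lb n) (snd bg) (d n)"
    for n and bg :: "(nat \<Rightarrow> 'a \<Rightarrow> complex) \<times> (nat \<Rightarrow> 'b \<Rightarrow> complex)"
  define Q where "Q n bg bg' \<longleftrightarrow> (\<forall>i<d n. fst bg' i = (\<lambda>x. a.S (fst bg i) x / complex_of_real (c n)) \<and>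
                                          snd bg' i = (\<lambda>y. b.S (snd bg i) y / complex_of_real (c n)))"
    for n and bg bg' :: "(nat \<Rightarrow> 'a \<Rightarrow> complex) \<times> (nat \<Rightarrow> 'b \<Rightarrow> complex)"
  have "\<exists>F. \<forall>n. P n (F n) \<and> Q n (F n) (F (Suc n))"
  proof (rule dependent_nat_choice)
    obtain b1 where b1: "onb (lev A la 0) b1 (card (lev A la 0))"
      using onb_extend[OF a.fin[of 0] onb_zero] by auto
    obtain b2 where b2: "onb (lev B lb 0) b2 (card (lev B lb 0))"
      using onb_extend[OF b.fin[of 0] onb_zero] by auto
    note b1 = b1[folded d_def] and b2 = b2[folded card[of 0], folded d_def]
    show "\<exists>x. P 0 x" using b1 b2 by (intro exI[of _ "(b1, b2)"]) (simp add: P_def)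
  next
    fix bg n assume Pn: "P n bg"
    define s1 where "s1 = (\<lambda>i x. a.S (fst bg i) x / complex_of_real (c n))"
    define s2 where "s2 = (\<lambda>i y. b.S (snd bg i) y / complex_of_real (c n))"
    have o1: "onb (lev A la (Suc n)) s1 (d n)" unfolding s1_def
      using a.onb_shift[OF _ cnz] Pn by (simp add: P_def)
    have o2: "onb (lev B lb (Suc n)) s2 (d n)" unfolding s2_def
      using b.onb_shift[OF _ cnz] Pn by (simp add: P_def)
    have le1: "d n \<le> card (lev A la (Suc n))" by (rule onb_le_card[OF a.fin o1])
    have le2: "d n \<le> card (lev B lb (Suc n))" by (rule onb_le_card[OF b.fin o2])
    obtain b1 where b1: "onb (lev A la (Suc n)) b1 (card (lev A la (Suc n)))" "\<forall>i<d n. b1 i = s1 i"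
      using onb_extend[OF a.fin o1 le1] by blast
    obtain b2 where b2: "onb (lev B lb (Suc n)) b2 (card (lev B lb (Suc n)))" "\<forall>i<d n. b2 i = s2 i"
      using onb_extend[OF b.fin o2 le2] by blast
    show "\<exists>y. P (Suc n) y \<and> Q n bg y"
      using b1 b2 card[of "Suc n"]
      by (intro exI[of _ "(b1, b2)"]) (simp add: P_def Q_def d_def s1_def s2_def)
  qed
  then obtain F where F: "\<And>n. P n (F n)" "\<And>n. Q n (F n) (F (Suc n))" by blast
  define \<beta> where "\<beta> n = fst (F n)" for n
  define \<gamma> where "\<gamma> n = snd (F n)" for n
  have bp: "bpair A la B lb \<beta> \<gamma> d"
    by unfold_locales (use F(1) card in \<open>auto simp: P_def \<beta>_def \<gamma>_def d_def a.fin b.fin\<close>)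
  interpret bp: bpair A la B lb \<beta> \<gamma> d by (rule bp)
  interpret bq: bpair B lb A la \<gamma> \<beta> d by (rule bp.sym)
  have Qb: "\<beta> (Suc n) i = (\<lambda>x. a.S (\<beta> n i) x / complex_of_real (c n))" if "i < d n" for n i
    using F(2)[of n] that by (simp add: Q_def \<beta>_def)
  have Qg: "\<gamma> (Suc n) i = (\<lambda>y. b.S (\<gamma> n i) y / complex_of_real (c n))" if "i < d n" for n i
    using F(2)[of n] that by (simp add: Q_def \<gamma>_def)
  have Sb: "a.S (\<beta> n i) = (\<lambda>x. complex_of_real (c n) * \<beta> (Suc n) i x)" if "i < d n" for n i
    using Qb[OF that] cnz[of n] by (simp add: fun_eq_iff)
  have Sg: "b.S (\<gamma> n i) = (\<lambda>x. complex_of_real (c n) * \<gamma> (Suc n) i x)" if "i < d n" for n i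
    using Qg[OF that] cnz[of n] by (simp add: fun_eq_iff)
  have dle: "d n \<le> d (Suc n)" for n
  proof -
    have "onb (lev A la (Suc n)) (\<lambda>i x. a.S (\<beta> n i) x / complex_of_real (c n)) (d n)"
      using a.onb_shift[OF bp.oX cnz] .
    from onb_le_card[OF a.fin this] show ?thesis by (simp add: d_def)
  qed
  have comm: "bp.U (a.S f) y = b.S (bp.U f) y" for f y
  proof (cases "y \<in> B")
    case False
    then show ?thesis by (simp add: bp.U_out b.S_out)
  next
    case yB: True
    show ?thesis
    proof (cases "lb y")
      case 0
      then have y: "y \<in> lev B lb 0" using yB by (simp add: lev_def)
      have z: "ip (lev A la 0) (a.S f) h = 0" for h
        unfolding ip_def by (rule sum.neutral) (auto simp: lev_def a.S_lev0)
      show ?thesis using 0 by (simp add: bp.U_lev[OF y] z b.S_lev0)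
    next
      case (Suc n)
      then have y: "y \<in> lev B lb (Suc n)" using yB by (simp add: lev_def)
      define ak where "ak k = ip (lev A la n) f (\<beta> n k)" for k
      define cc where "cc = complex_of_real (c n)"
      have ipS: "ip (lev A la (Suc n)) (a.S f) (\<beta> (Suc n) i) = (if i < d n then cc * ak i else 0)"
        if i: "i < d (Suc n)" for i
      proof -
        have "ip (lev A la (Suc n)) (a.S f) (\<beta> (Suc n) i)
            = ip (lev A la (Suc n)) (a.S (\<Sum>k<d n. (\<lambda>x. ak k * \<beta> n k x))) (\<beta> (Suc n) i)"
        proof (rule ip_cong, rule a.S_local)
          fix x z assume "z \<in> lev A la n"
          then show "f z = (\<Sum>k<d n. (\<lambda>x. ak k * \<beta> n k x)) z"
            using bp.complete_X[of z n f] by (simp add: sum_fun_apply ak_def)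
        qed
        also have "\<dots> = (\<Sum>k<d n. ak k * ip (lev A la (Suc n)) (a.S (\<beta> n k)) (\<beta> (Suc n) i))"
          by (simp only: gshift_sum ip_sum_left)
        also have "\<dots> = (\<Sum>k<d n. (ak k * cc) * ip (lev A la (Suc n)) (\<beta> (Suc n) k) (\<beta> (Suc n) i))"
          by (intro sum.cong) (simp_all add: Sb ip_scale_left' cc_def)
        also have "\<dots> = (if i < d n then cc * ak i else 0)"
          using onb_delta_sum2[OF bp.oX dle i] by (simp add: mult.commute)
        finally show ?thesis .
      qed
      have "bp.U (a.S f) y = (\<Sum>i<d (Suc n). ip (lev A la (Suc n)) (a.S f) (\<beta> (Suc n) i) * \<gamma> (Suc n) i y)"
        by (rule bp.U_lev[OF y])
      also have "\<dots> = (\<Sum>i<d (Suc n). if i < d n then cc * ak i * \<gamma> (Suc n) i y else 0)"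
        by (intro sum.cong) (simp_all add: ipS)
      also have "\<dots> = (\<Sum>i<d n. cc * ak i * \<gamma> (Suc n) i y)"
        by (rule sum_if_less[OF dle])
      also have "\<dots> = (\<Sum>k<d n. ak k * b.S (\<gamma> n k) y)"
        by (intro sum.cong) (simp_all add: Sg cc_def)
      also have "\<dots> = b.S (\<Sum>k<d n. (\<lambda>z. ak k * \<gamma> n k z)) y"
        by (simp only: gshift_sum sum_fun_apply)
      also have "\<dots> = b.S (bp.U f) y"
      proof (rule b.S_local[OF y])
        fix z assume "z \<in> lev B lb n"
        then show "(\<Sum>k<d n. (\<lambda>z. ak k * \<gamma> n k z)) z = bp.U f z"
          by (simp add: bp.U_lev sum_fun_apply ak_def mult.commute)
      qed
      finally show ?thesis .
    qed
  qed
  have unit: "unitary_between A B bp.U"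
    unfolding unitary_between_def
  proof (intro conjI ballI allI)
    show "bij_betw bp.U (l2 A) (l2 B)"
    proof (rule bij_betw_byWitness[where f'="bq.U"])
      show "\<forall>f\<in>l2 A. bq.U (bp.U f) = f" using bpair_inverse[OF bp.sym] by (auto simp: l2_def)
      show "\<forall>g\<in>l2 B. bp.U (bq.U g) = g" using bpair_inverse[OF bp] by (auto simp: l2_def)
      show "bp.U ` l2 A \<subseteq> l2 B" using bp.U_l2 by auto
      show "bq.U ` l2 B \<subseteq> l2 A" using bq.U_l2 by auto
    qed
  next
    fix f g k show "bp.U (\<lambda>x. k * f x + g x) = (\<lambda>y. k * bp.U f y + bp.U g y)" by (rule bp.U_lin)
  next
    fix f assume "f \<in> l2 A" then show "l2norm B (bp.U f) = l2norm A f" by (rule bp.U_l2)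
  qed
  show ?thesis using unit comm by (intro exI[of _ bp.U]) (auto simp: fun_eq_iff)
qed


locale rtree =
  fixes V :: "'v set" and E :: "('v \<times> 'v) set"
  assumes rooted: "rooted_directed_tree V E"
begin

abbreviation "r \<equiv> root V E"
abbreviation "dp \<equiv> depth V E"

lemma dtree: "directed_tree V E" using rooted by (simp add: rooted_directed_tree_def)

lemma E_sub: "E \<subseteq> V \<times> V"
  using dtree by (simp add: directed_tree_def)

lemma uniq_par: "(v, u) \<in> E \<Longrightarrow> (w, u) \<in> E \<Longrightarrow> v = w"
  using dtree unfolding directed_tree_def by (elim conjE) (erule allE, erule allE, erule allE, erule mp, simp)

lemma conn: "u \<in> V \<Longrightarrow> v \<in> V \<Longrightarrow> (u, v) \<in> (E \<union> E\<inverse>)\<^sup>*"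
  using dtree by (simp add: directed_tree_def)

lemma root_props: "r \<in> V \<and> \<not> has_parent E r"
proof -
  have "\<exists>!x. x \<in> V \<and> \<not> has_parent E x" using rooted unfolding rooted_directed_tree_def by blast
  then show ?thesis unfolding root_def by (rule theI')
qed

lemma root_in: "r \<in> V" and root_np: "\<not> has_parent E r" using root_props by auto

lemma root_unique: assumes "v \<in> V" "\<not> has_parent E v" shows "v = r"
proof -
  have "\<exists>!x. x \<in> V \<and> \<not> has_parent E x" using rooted unfolding rooted_directed_tree_def by (elim conjE)
  then show ?thesis using assms root_props by (elim ex1E) auto
qed

lemma no_edge_to_root: "(z, r) \<notin> E"
  using root_np unfolding has_parent_def by blast

lemma parent_eq: "(v, u) \<in> E \<Longrightarrow> parent E u = v"
  unfolding parent_def by (rule the_equality) (use uniq_par in blast)+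

lemma has_parent_edge: "has_parent E u \<Longrightarrow> (parent E u, u) \<in> E"
  unfolding has_parent_def using parent_eq by auto

lemma reach_aux: "(r, x) \<in> (E \<union> E\<inverse>)\<^sup>* \<Longrightarrow> (r, x) \<in> E\<^sup>*"
proof (induction rule: rtrancl_induct)
  case base then show ?case by simp
next
  case (step y z)
  show ?case
  proof (cases "(y, z) \<in> E")
    case True show ?thesis by (rule rtrancl_into_rtrancl[OF step.IH True])
  next
    case False
    then have zy: "(z, y) \<in> E" using step.hyps(2) by auto
    have "y \<noteq> r" using zy no_edge_to_root by auto
    with step.IH obtain y' where "(r, y') \<in> E\<^sup>*" "(y', y) \<in> E"
      by (auto elim: rtranclE)
    moreover have "y' = z" using uniq_par zy \<open>(y', y) \<in> E\<close> by blast
    ultimately show ?thesis by simp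
  qed
qed

lemma reach: "v \<in> V \<Longrightarrow> \<exists>n. (r, v) \<in> E ^^ n"
  using reach_aux[OF conn[OF root_in]] by (simp add: rtrancl_power)

lemma pow_unique: "(r, v) \<in> E ^^ n \<Longrightarrow> (r, v) \<in> E ^^ m \<Longrightarrow> n = m"
proof (induction n arbitrary: m v)
  case 0
  then have v: "v = r" by simp
  show ?case
  proof (cases m)
    case (Suc m')
    with 0 v obtain z where "(z, r) \<in> E" by auto
    then show ?thesis using no_edge_to_root by blast
  qed simp
next
  case (Suc n)
  from Suc.prems(1) obtain z where z: "(r, z) \<in> E ^^ n" "(z, v) \<in> E" by auto
  show ?case
  proof (cases m)
    case 0
    then have "v = r" using Suc.prems(2) by simp
    then show ?thesis using z(2) no_edge_to_root by blast
  next
    case (Suc m')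
    with Suc.prems(2) obtain z' where z': "(r, z') \<in> E ^^ m'" "(z', v) \<in> E" by auto
    have "z = z'" using uniq_par z(2) z'(2) by blast
    then show ?thesis using Suc.IH[OF z(1)] z'(1) Suc by simp
  qed
qed

lemma depth_eq: "(r, v) \<in> E ^^ n \<Longrightarrow> dp v = n"
  unfolding depth_def using pow_unique by blast

lemma depth_ex: "v \<in> V \<Longrightarrow> (r, v) \<in> E ^^ (dp v)"
proof -
  assume "v \<in> V"
  then obtain n where n: "(r, v) \<in> E ^^ n" using reach by blast
  then have "dp v = n" by (rule depth_eq)
  then show ?thesis using n by simp
qed

lemma depth_root: "dp r = 0"
  by (rule depth_eq) simp

lemma depth_edge: "(u, v) \<in> E \<Longrightarrow> dp v = Suc (dp u)"
proof -
  assume e: "(u, v) \<in> E"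
  then have "u \<in> V" using E_sub by auto
  then have "(r, u) \<in> E ^^ dp u" by (rule depth_ex)
  with e have "(r, v) \<in> E ^^ Suc (dp u)" by auto
  then show ?thesis by (rule depth_eq)
qed

lemma depth0: "v \<in> V \<Longrightarrow> dp v = 0 \<Longrightarrow> v = r"
  using depth_ex[of v] by simp

lemma nonroot_parent: "v \<in> V \<Longrightarrow> v \<noteq> r \<Longrightarrow> has_parent E v"
  using root_unique by blast

lemma lev0: "lev V dp 0 = {r}"
proof
  show "lev V dp 0 \<subseteq> {r}" unfolding lev_def using depth0 by blast
  show "{r} \<subseteq> lev V dp 0" unfolding lev_def using root_in depth_root by simp
qed

lemma lev_Suc_sub: "lev V dp (Suc n) \<subseteq> (\<Union>v\<in>lev V dp n. Chi E v)"
proof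
  fix u assume u: "u \<in> lev V dp (Suc n)"
  then have "u \<noteq> r" using depth_root by (auto simp: lev_def)
  then have "has_parent E u" using u nonroot_parent by (auto simp: lev_def)
  then have e: "(parent E u, u) \<in> E" by (rule has_parent_edge)
  then have "parent E u \<in> lev V dp n" using depth_edge[OF e] u E_sub by (auto simp: lev_def)
  then show "u \<in> (\<Union>v\<in>lev V dp n. Chi E v)" using e by (auto simp: Chi_def)
qed

lemma lev_fin: assumes "locally_finite V E" shows "finite (lev V dp n)"
proof (induction n)
  case 0 then show ?case by (simp add: lev0)
next
  case (Suc n)
  have "finite (\<Union>v\<in>lev V dp n. Chi E v)"
    using Suc assms by (auto simp: locally_finite_def lev_def)
  then show ?case using lev_Suc_sub finite_subset by blast
qed

lemma children_eq: "v \<in> V \<Longrightarrow> {x. (x \<in> V \<and> has_parent E x) \<and> parent E x = v} = Chi E v"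
  unfolding Chi_def using E_sub has_parent_edge parent_eq by (auto simp: has_parent_def)

end

definition cq :: "real \<Rightarrow> nat \<Rightarrow> real" where "cq q n = sqrt ((real n + q) / (real n + 1))"

lemma cq_pos: "q \<ge> 1 \<Longrightarrow> cq q n > 0"
  unfolding cq_def by simp

lemma cq_sq: "q \<ge> 1 \<Longrightarrow> (cq q n)\<^sup>2 = (real n + q) / (real n + 1)"
  unfolding cq_def by simp

lemma src_gforest:
  assumes T: "rooted_directed_tree V E" and lf: "leafless V E" and fin: "locally_finite V E" and q: "q \<ge> 1"
  shows "gforest V (depth V E) (\<lambda>u. u \<in> V \<and> has_parent E u) (dirichlet_weight V E q) (parent E) (cq q)"
proof -
  interpret rtree V E by unfold_locales (rule T)
  show ?thesis
  proof
    show "finite (lev V dp n)" for n by (rule lev_fin[OF fin])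
  next
    fix x assume "x \<in> V \<and> has_parent E x"
    then have "(parent E x, x) \<in> E" "x \<in> V" using has_parent_edge by auto
    then show "x \<in> V \<and> parent E x \<in> V \<and> dp x = Suc (dp (parent E x))"
      using E_sub depth_edge by auto
  next
    fix v assume v: "v \<in> V"
    have fc: "finite (Chi E v)" using fin v by (auto simp: locally_finite_def)
    have ne: "Chi E v \<noteq> {}" using lf v by (auto simp: leafless_def)
    then have cpos: "card (Chi E v) > 0" using fc by (simp add: card_gt_0_iff)
    have w2: "(dirichlet_weight V E q x)\<^sup>2 = (1 / real (card (Chi E v))) * ((real (dp v) + q) / (real (dp v) + 1))"
      if "x \<in> Chi E v" for x
    proof -
      have "parent E x = v" using that parent_eq by (auto simp: Chi_def)
      moreover have "(real (dp v) + q) / (real (dp v) + 1) \<ge> 0" using q by simp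
      ultimately show ?thesis
        by (simp add: dirichlet_weight_def Let_def power_mult_distrib power_divide)
    qed
    have "(\<Sum>x\<in>{x. (x \<in> V \<and> has_parent E x) \<and> parent E x = v}. (dirichlet_weight V E q x)\<^sup>2)
        = (\<Sum>x\<in>Chi E v. (1 / real (card (Chi E v))) * ((real (dp v) + q) / (real (dp v) + 1)))"
      using children_eq[OF v] w2 by simp
    also have "\<dots> = (real (dp v) + q) / (real (dp v) + 1)" using cpos by simp
    also have "\<dots> = (cq q (dp v))\<^sup>2" using cq_sq[OF q] by simp
    finally show "(\<Sum>x\<in>{x. (x \<in> V \<and> has_parent E x) \<and> parent E x = v}. (dirichlet_weight V E q x)\<^sup>2) = (cq q (dp v))\<^sup>2" .
  qed
qed

lemma dirichlet_gshift: "dirichlet_shift V E q = gshift (\<lambda>u. u \<in> V \<and> has_parent E u) (dirichlet_weight V E q) (parent E)"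
  unfolding dirichlet_shift_def weighted_shift_def gshift_def by simp


definition TB :: "nat \<Rightarrow> (nat \<times> nat) set" where "TB m = {..<m} \<times> (UNIV :: nat set)"
definition TR :: "nat \<Rightarrow> nat \<times> nat \<Rightarrow> bool" where "TR m = (\<lambda>(j, t). j < m \<and> 0 < t)"
definition Tp :: "nat \<times> nat \<Rightarrow> nat \<times> nat" where "Tp = (\<lambda>(j, t). (j, t - 1))"
definition Tw :: "real \<Rightarrow> nat \<times> nat \<Rightarrow> real" where
  "Tw q = (\<lambda>(j, t). sqrt ((real (t - 1) + q) / (real (t - 1) + 1)))"
definition Tl :: "(nat \<Rightarrow> nat) \<Rightarrow> nat \<times> nat \<Rightarrow> nat" where "Tl s = (\<lambda>(j, t). t + s j)"

lemma classical_gshift: "classical_dirichlet_sum m q = gshift (TR m) (Tw q) Tp"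
  unfolding classical_dirichlet_sum_def gshift_def TR_def Tw_def Tp_def
  by (auto simp: fun_eq_iff)

lemma tgt_gforest:
  assumes q: "q \<ge> 1" and s: "q = 1 \<or> (\<forall>j<m. s j = 0)"
  shows "gforest (TB m) (Tl s) (TR m) (Tw q) Tp (cq q)"
proof
  fix n
  show "finite (lev (TB m) (Tl s) n)"
    by (rule finite_subset[of _ "{..<m} \<times> {..n}"]) (auto simp: lev_def TB_def Tl_def)
next
  fix x assume "TR m x"
  then show "x \<in> TB m \<and> Tp x \<in> TB m \<and> Tl s x = Suc (Tl s (Tp x))"
    by (cases x) (auto simp: TR_def TB_def Tp_def Tl_def)
next
  fix v assume v: "v \<in> TB m"
  obtain j t where jt: "v = (j, t)" by (cases v)
  have j: "j < m" using v jt by (simp add: TB_def)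
  have set: "{x. TR m x \<and> Tp x = v} = {(j, Suc t)}"
    using j jt by (auto simp: TR_def Tp_def)
  have nn: "(real t + q) / (real t + 1) \<ge> 0" using q by simp
  have "(\<Sum>x\<in>{x. TR m x \<and> Tp x = v}. (Tw q x)\<^sup>2) = (real t + q) / (real t + 1)"
    unfolding set using nn by (simp add: Tw_def)
  also have "\<dots> = (cq q (Tl s v))\<^sup>2"
  proof (cases "q = 1")
    case True then show ?thesis by (simp add: cq_sq jt Tl_def)
  next
    case False
    then have "s j = 0" using s j by auto
    then show ?thesis using cq_sq[OF q] by (simp add: jt Tl_def)
  qed
  finally show "(\<Sum>x\<in>{x. TR m x \<and> Tp x = v}. (Tw q x)\<^sup>2) = (cq q (Tl s v))\<^sup>2" .
qed

lemma tgt_card: "card (lev (TB m) (Tl s) n) = card {j. j < m \<and> s j \<le> n}"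
proof -
  have "bij_betw (\<lambda>j. (j, n - s j)) {j. j < m \<and> s j \<le> n} (lev (TB m) (Tl s) n)"
    unfolding bij_betw_def inj_on_def
  proof (intro conjI ballI impI)
    show "(\<lambda>j. (j, n - s j)) ` {j. j < m \<and> s j \<le> n} = lev (TB m) (Tl s) n"
    proof
      show "(\<lambda>j. (j, n - s j)) ` {j. j < m \<and> s j \<le> n} \<subseteq> lev (TB m) (Tl s) n"
        by (auto simp: lev_def TB_def Tl_def)
      show "lev (TB m) (Tl s) n \<subseteq> (\<lambda>j. (j, n - s j)) ` {j. j < m \<and> s j \<le> n}"
        by (auto simp: lev_def TB_def Tl_def image_iff)
    qed
  qed auto
  then show ?thesis by (simp add: bij_betw_same_card)
qed

context rtree begin

lemma iso_levels:
  assumes iso: "iso_to_nat V E"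
  shows "card (lev V dp n) = 1"
proof -
  obtain f where bij: "bij_betw f V (UNIV :: nat set)"
    and ed: "\<And>u v. u \<in> V \<Longrightarrow> v \<in> V \<Longrightarrow> (u, v) \<in> E \<longleftrightarrow> f v = f u + 1"
    using iso unfolding iso_to_nat_def by blast
  have fr: "f r = 0"
  proof (rule ccontr)
    assume "f r \<noteq> 0"
    then obtain k where k: "f r = Suc k" using not0_implies_Suc by blast
    obtain u where u: "u \<in> V" "f u = k" using bij unfolding bij_betw_def by (metis UNIV_I imageE)
    have "(u, r) \<in> E" using ed[OF u(1) root_in] u k by simp
    then show False using no_edge_to_root by blast
  qed
  have fdp: "f v = n" if "(r, v) \<in> E ^^ n" for v n
    using that
  proof (induction n arbitrary: v)
    case 0 then show ?case using fr by simp
  next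
    case (Suc n)
    then obtain z where z: "(r, z) \<in> E ^^ n" "(z, v) \<in> E" by auto
    have "z \<in> V" "v \<in> V" using z(2) E_sub by auto
    then have "f v = f z + 1" using ed z(2) by blast
    then show ?case using Suc.IH[OF z(1)] by simp
  qed
  obtain v0 where v0: "v0 \<in> V" "f v0 = n" using bij unfolding bij_betw_def by (metis UNIV_I imageE)
  have "lev V dp n = {v0}"
  proof
    show "lev V dp n \<subseteq> {v0}"
    proof
      fix v assume v: "v \<in> lev V dp n"
      then have "f v = n" using fdp[OF depth_ex] by (auto simp: lev_def)
      then show "v \<in> {v0}" using v v0 bij unfolding bij_betw_def inj_on_def lev_def by auto
    qed
    show "{v0} \<subseteq> lev V dp n" using v0 fdp[OF depth_ex[OF v0(1)]] by (simp add: lev_def)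
  qed
  then show ?thesis by simp
qed

lemma fbi_bound:
  assumes "finite_branching_index V E"
  shows "\<exists>K. \<forall>v\<in>V. K \<le> dp v \<longrightarrow> card (Chi E v) < 2"
proof (cases "branching_vertices V E = {}")
  case True
  then show ?thesis by (intro exI[of _ 0]) (auto simp: branching_vertices_def)
next
  case False
  then have "1 + (SUP w\<in>branching_vertices V E. enat (dp w)) < \<infinity>"
    using assms by (simp add: finite_branching_index_def branching_index_def)
  then have ninf: "(SUP w\<in>branching_vertices V E. enat (dp w)) \<noteq> \<infinity>"
  proof (intro notI)
    assume "1 + (SUP w\<in>branching_vertices V E. enat (dp w)) < \<infinity>"
      and "(SUP w\<in>branching_vertices V E. enat (dp w)) = \<infinity>"
    then show False by simp
  qed
  obtain K where K: "(SUP w\<in>branching_vertices V E. enat (dp w)) = enat K"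
    using ninf by (cases "(SUP w\<in>branching_vertices V E. enat (dp w))") auto
  have "dp w \<le> K" if "w \<in> branching_vertices V E" for w
  proof -
    have "enat (dp w) \<le> (SUP w\<in>branching_vertices V E. enat (dp w))" using that by (rule SUP_upper)
    then show ?thesis using K by simp
  qed
  then show ?thesis
    by (intro exI[of _ "Suc K"]) (force simp: branching_vertices_def)
qed

lemma q1_levels:
  assumes lf: "leafless V E" and fin: "locally_finite V E" and fbi: "finite_branching_index V E"
  shows "\<exists>(m::nat) (s::nat \<Rightarrow> nat). \<forall>n. card (lev V dp n) = card {j. j < m \<and> s j \<le> n}"
proof -
  interpret g: gforest V dp "\<lambda>u. u \<in> V \<and> has_parent E u" "dirichlet_weight V E 1" "parent E" "cq 1"
    by (rule src_gforest[OF rooted lf fin]) simp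
  define d where "d n = card (lev V dp n)" for n
  have mono1: "d n \<le> d (Suc n)" for n
  proof -
    obtain b where b: "onb (lev V dp n) b (d n)"
      using onb_extend[OF g.fin[of n] onb_zero] unfolding d_def by auto
    have "onb (lev V dp (Suc n)) (\<lambda>i x. g.S (b i) x / complex_of_real (cq 1 n)) (d n)"
      using g.onb_shift[OF b] cq_pos[of 1 n] by simp
    from onb_le_card[OF g.fin this] show ?thesis by (simp add: d_def)
  qed
  have mono: "d a \<le> d b" if "a \<le> b" for a b
    using lift_Suc_mono_le[of d, OF mono1 that] .
  obtain K where K: "\<And>v. v \<in> V \<Longrightarrow> K \<le> dp v \<Longrightarrow> card (Chi E v) < 2"
    using fbi_bound[OF fbi] by blast
  have dec: "d (Suc n) \<le> d n" if n: "K \<le> n" for n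
  proof -
    have "d (Suc n) \<le> card (\<Union>v\<in>lev V dp n. Chi E v)"
      unfolding d_def using lev_Suc_sub g.fin fin
      by (intro card_mono) (auto simp: locally_finite_def lev_def)
    also have "\<dots> \<le> (\<Sum>v\<in>lev V dp n. card (Chi E v))" by (rule card_UN_le[OF g.fin])
    also have "\<dots> \<le> (\<Sum>v\<in>lev V dp n. 1)"
      by (rule sum_mono) (use K n in \<open>fastforce simp: lev_def\<close>)
    also have "\<dots> = d n" by (simp add: d_def)
    finally show ?thesis .
  qed
  have const: "d n = d K" if "K \<le> n" for n
    using that
  proof (induction n rule: dec_induct)
    case base then show ?case by simp
  next
    case (step n) then show ?case using dec[OF step.hyps(1)] mono1[of n] by simp
  qed
  define m where "m = d K"
  have dm: "d n \<le> m" for n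
  proof (cases "n \<le> K")
    case True then show ?thesis unfolding m_def by (rule mono)
  next
    case False then show ?thesis unfolding m_def using const[of n] by simp
  qed
  define s where "s j = (LEAST k. j < d k)" for j
  have eq: "{j. j < m \<and> s j \<le> n} = {..<d n}" for n
  proof
    show "{j. j < m \<and> s j \<le> n} \<subseteq> {..<d n}"
    proof
      fix j assume j: "j \<in> {j. j < m \<and> s j \<le> n}"
      then have "j < d K" by (simp add: m_def)
      then have "j < d (s j)" unfolding s_def by (rule LeastI)
      also have "d (s j) \<le> d n" using j by (intro mono) simp
      finally show "j \<in> {..<d n}" by simp
    qed
    show "{..<d n} \<subseteq> {j. j < m \<and> s j \<le> n}"
    proof
      fix j assume "j \<in> {..<d n}"
      then have j: "j < d n" by simp
      then have "s j \<le> n" unfolding s_def by (rule Least_le)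
      then show "j \<in> {j. j < m \<and> s j \<le> n}" using j dm[of n] by simp
    qed
  qed
  show ?thesis by (intro exI[of _ m] exI[of _ s]) (simp add: eq d_def)
qed

end

theorem backward:
  assumes T: "rooted_directed_tree V E" and lf: "leafless V E" and fin: "locally_finite V E"
    and fbi: "finite_branching_index V E" and q: "q \<ge> 1" and h: "q = 1 \<or> iso_to_nat V E"
  shows "\<exists>m::nat. unitarily_equivalent V (dirichlet_shift V E q)
                     ({..<m} \<times> (UNIV :: nat set)) (classical_dirichlet_sum m q)"
proof -
  interpret rtree V E by unfold_locales (rule T)
  obtain m :: nat and s :: "nat \<Rightarrow> nat" where ms: "\<And>n. card (lev V dp n) = card {j. j < m \<and> s j \<le> n}"
    and qs: "q = 1 \<or> (\<forall>j<m. s j = 0)"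
  proof (cases "q = 1")
    case True
    then show ?thesis using q1_levels[OF lf fin fbi] that by blast
  next
    case False
    then have iso: "iso_to_nat V E" using h by simp
    have "card (lev V dp n) = card {j. j < (1::nat) \<and> (\<lambda>_. 0::nat) j \<le> n}" for n
      using iso_levels[OF iso] by simp
    then show ?thesis using that[of 1 "\<lambda>_. 0"] by auto
  qed
  have GA: "gforest V dp (\<lambda>u. u \<in> V \<and> has_parent E u) (dirichlet_weight V E q) (parent E) (cq q)"
    by (rule src_gforest[OF T lf fin q])
  have GB: "gforest (TB m) (Tl s) (TR m) (Tw q) Tp (cq q)" by (rule tgt_gforest[OF q qs])
  have "\<exists>U. unitary_between V (TB m) U \<and>
          (\<forall>f. U (gshift (\<lambda>u. u \<in> V \<and> has_parent E u) (dirichlet_weight V E q) (parent E) f) = gshift (TR m) (Tw q) Tp (U f))"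
  proof (rule gequiv[OF GA GB])
    show "cq q n \<noteq> 0" for n using cq_pos[OF q, of n] by simp
    show "card (lev V dp n) = card (lev (TB m) (Tl s) n)" for n by (simp add: ms tgt_card)
  qed
  then show ?thesis
    unfolding unitarily_equivalent_def dirichlet_gshift classical_gshift TB_def[symmetric]
    by blast
qed


definition nsq :: "'a set \<Rightarrow> ('a \<Rightarrow> complex) \<Rightarrow> real" where
  "nsq A f = infsum (\<lambda>x. (cmod (f x))\<^sup>2) A"

lemma nsq_nonneg: "nsq A f \<ge> 0"
  unfolding nsq_def by (rule infsum_nonneg) simp

lemma l2norm_nsq: "l2norm B g = l2norm A f \<Longrightarrow> nsq B g = nsq A f"
  unfolding l2norm_def nsq_def[symmetric] using nsq_nonneg by (metis real_sqrt_eq_iff)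

lemma cmod_add_sq: "(cmod (a + b))\<^sup>2 = (cmod a)\<^sup>2 + (cmod b)\<^sup>2 + 2 * Re (a * cnj b)"
  unfolding cmod_power2 by (simp add: power2_eq_square algebra_simps)

lemma nsq_fin:
  assumes "finite F" "F \<subseteq> A" "\<And>x. x \<notin> F \<Longrightarrow> h x = 0"
  shows "(\<lambda>x. (cmod (h x))\<^sup>2) summable_on A" "nsq A h = (\<Sum>x\<in>F. (cmod (h x))\<^sup>2)"
proof -
  have hs: "((\<lambda>x. (cmod (h x))\<^sup>2) has_sum (\<Sum>x\<in>F. (cmod (h x))\<^sup>2)) A"
    by (rule has_sum_finite_neutralI) (use assms in auto)
  then show "(\<lambda>x. (cmod (h x))\<^sup>2) summable_on A" by (rule has_sum_imp_summable)
  show "nsq A h = (\<Sum>x\<in>F. (cmod (h x))\<^sup>2)" unfolding nsq_def using hs by (rule infsumI)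
qed

lemma l2_fin:
  assumes "finite F" "F \<subseteq> A" "\<And>x. x \<notin> F \<Longrightarrow> h x = 0"
  shows "h \<in> l2 A"
  using nsq_fin(1)[OF assms] assms unfolding l2_def by auto

lemma fmod:
  assumes g: "(\<lambda>x. (cmod (g x))\<^sup>2) summable_on A" and F: "finite F" "F \<subseteq> A"
    and h: "\<And>x. x \<notin> F \<Longrightarrow> h x = 0"
  shows "(\<lambda>x. (cmod (g x + h x))\<^sup>2) summable_on A"
    "nsq A (\<lambda>x. g x + h x) = nsq A g + (\<Sum>x\<in>F. (cmod (g x + h x))\<^sup>2 - (cmod (g x))\<^sup>2)"
proof -
  define D where "D x = (if x \<in> F then (cmod (g x + h x))\<^sup>2 - (cmod (g x))\<^sup>2 else 0)" for x
  have pw: "(cmod (g x + h x))\<^sup>2 = (cmod (g x))\<^sup>2 + D x" for x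
    by (auto simp: D_def h)
  have Ds: "(D has_sum (\<Sum>x\<in>F. (cmod (g x + h x))\<^sup>2 - (cmod (g x))\<^sup>2)) A"
    by (rule has_sum_finite_neutralI) (use F in \<open>auto simp: D_def\<close>)
  have "((\<lambda>x. (cmod (g x))\<^sup>2 + D x) has_sum (infsum (\<lambda>x. (cmod (g x))\<^sup>2) A + (\<Sum>x\<in>F. (cmod (g x + h x))\<^sup>2 - (cmod (g x))\<^sup>2))) A"
    by (rule has_sum_add[OF has_sum_infsum[OF g] Ds])
  then have hs: "((\<lambda>x. (cmod (g x + h x))\<^sup>2) has_sum (nsq A g + (\<Sum>x\<in>F. (cmod (g x + h x))\<^sup>2 - (cmod (g x))\<^sup>2))) A"
    unfolding pw nsq_def .
  then show "(\<lambda>x. (cmod (g x + h x))\<^sup>2) summable_on A" by (rule has_sum_imp_summable)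
  show "nsq A (\<lambda>x. g x + h x) = nsq A g + (\<Sum>x\<in>F. (cmod (g x + h x))\<^sup>2 - (cmod (g x))\<^sup>2)"
    unfolding nsq_def using hs by (simp add: nsq_def infsumI)
qed

lemma sq2: fixes a b :: real shows "(a + b)\<^sup>2 \<le> 2 * a\<^sup>2 + 2 * b\<^sup>2"
proof -
  have "0 \<le> (a - b)\<^sup>2" by simp
  then show ?thesis by (simp add: power2_eq_square algebra_simps)
qed

lemma l2_lin:
  assumes f: "f \<in> l2 A" and g: "g \<in> l2 A"
  shows "(\<lambda>x. k * f x + g x) \<in> l2 A"
proof -
  have sf: "(\<lambda>x. (cmod (f x))\<^sup>2) summable_on A" and sg: "(\<lambda>x. (cmod (g x))\<^sup>2) summable_on A"
    using f g by (auto simp: l2_def)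
  have b: "(\<lambda>x. 2 * (cmod k)\<^sup>2 * (cmod (f x))\<^sup>2 + 2 * (cmod (g x))\<^sup>2) summable_on A"
    by (intro summable_on_add summable_on_cmult_right sf sg)
  have le: "(cmod (k * f x + g x))\<^sup>2 \<le> 2 * (cmod k)\<^sup>2 * (cmod (f x))\<^sup>2 + 2 * (cmod (g x))\<^sup>2" for x
  proof -
    have "cmod (k * f x + g x) \<le> cmod k * cmod (f x) + cmod (g x)"
      using norm_triangle_ineq[of "k * f x" "g x"] by (simp add: norm_mult)
    then have "(cmod (k * f x + g x))\<^sup>2 \<le> (cmod k * cmod (f x) + cmod (g x))\<^sup>2"
      by (intro power_mono) auto
    also have "\<dots> \<le> 2 * (cmod k * cmod (f x))\<^sup>2 + 2 * (cmod (g x))\<^sup>2"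
      by (rule sq2)
    also have "\<dots> = 2 * (cmod k)\<^sup>2 * (cmod (f x))\<^sup>2 + 2 * (cmod (g x))\<^sup>2"
      by (simp add: power_mult_distrib)
    finally show ?thesis .
  qed
  have "(\<lambda>x. (cmod (k * f x + g x))\<^sup>2) summable_on A"
    by (rule summable_on_comparison_test[OF b]) (use le in auto)
  then show ?thesis using f g by (auto simp: l2_def)
qed

context gforest begin

definition ls :: "('a \<Rightarrow> complex) \<Rightarrow> nat \<Rightarrow> real" where
  "ls f n = (\<Sum>x\<in>lev A la n. (cmod (f x))\<^sup>2)"

lemma ls_eq: "ls f = (\<lambda>n. \<Sum>x\<in>lev A la n. (cmod (f x))\<^sup>2)"
  by (rule ext) (simp add: ls_def)

lemma ls_has_sum: "f \<in> l2 A \<Longrightarrow> (ls f has_sum nsq A f) UNIV"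
proof -
  assume f: "f \<in> l2 A"
  have s: "(\<lambda>x. (cmod (f x))\<^sup>2) summable_on A" using f by (simp add: l2_def)
  have "(ls f) summable_on UNIV" and "infsum (ls f) UNIV = nsq A f"
    using part_sum[OF fin lev_union lev_disj, of "\<lambda>x. (cmod (f x))\<^sup>2"] s
    by (auto simp: ls_eq nsq_def)
  then show ?thesis by (metis has_sum_infsum)
qed

lemma S_l2:
  assumes f: "f \<in> l2 A" and C: "\<And>n. (c n)\<^sup>2 \<le> C"
  shows "S f \<in> l2 A" "((\<lambda>n. (c n)\<^sup>2 * ls f n) has_sum nsq A (S f)) UNIV"
proof -
  have lsf: "(ls f has_sum nsq A f) UNIV" by (rule ls_has_sum[OF f])
  have lsnn: "ls f n \<ge> 0" for n unfolding ls_def by (rule sum_nonneg) simp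
  have tsum: "(\<lambda>n. (c n)\<^sup>2 * ls f n) summable_on UNIV"
  proof (rule summable_on_comparison_test)
    show "(\<lambda>n. C * ls f n) summable_on UNIV"
      by (rule summable_on_cmult_right) (use lsf in \<open>auto dest: has_sum_imp_summable\<close>)
    show "(c n)\<^sup>2 * ls f n \<le> C * ls f n" for n using C[of n] lsnn[of n] by (rule mult_right_mono)
    show "0 \<le> (c n)\<^sup>2 * ls f n" for n using lsnn[of n] by simp
  qed
  define X where "X = infsum (\<lambda>n. (c n)\<^sup>2 * ls f n) UNIV"
  have tX: "((\<lambda>n. (c n)\<^sup>2 * ls f n) has_sum X) UNIV" unfolding X_def using tsum by simp
  have lsS: "ls (S f) = (\<lambda>k. if k = 0 then 0 else (c (k - 1))\<^sup>2 * ls f (k - 1))"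
  proof (rule ext)
    fix k show "ls (S f) k = (if k = 0 then 0 else (c (k - 1))\<^sup>2 * ls f (k - 1))"
      using lev_norm_shift0[where f=f] lev_norm_shift[where n="k - 1" and f=f]
      by (cases k) (auto simp: ls_def)
  qed
  have "((ls (S f) \<circ> Suc) has_sum X) UNIV" using tX by (simp add: lsS o_def)
  then have "(ls (S f) has_sum X) (range Suc)" by (subst has_sum_reindex) auto
  then have hS: "(ls (S f) has_sum X) UNIV"
    by (rule has_sum_cong_neutral[THEN iffD1, rotated -1]) (auto simp: lsS image_iff dest: gr0_implies_Suc)
  have "(\<lambda>x. (cmod (S f x))\<^sup>2) summable_on A" and iS: "infsum (\<lambda>x. (cmod (S f x))\<^sup>2) A = X"
    using part_sum[OF fin lev_union lev_disj, of "\<lambda>x. (cmod (S f x))\<^sup>2"] hS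
    by (auto simp: ls_def[symmetric] dest: has_sum_imp_summable simp: infsumI)
  then show "S f \<in> l2 A" by (auto simp: l2_def S_out)
  show "((\<lambda>n. (c n)\<^sup>2 * ls f n) has_sum nsq A (S f)) UNIV" using tX iS by (simp add: nsq_def)
qed

lemma eig:
  assumes f: "f \<in> l2 A" and c0: "(c 0)\<^sup>2 = q" and cn: "\<And>n. n > 0 \<Longrightarrow> (c n)\<^sup>2 < q"
    and eq: "nsq A (S f) = q * nsq A f"
  shows "\<And>x. x \<in> A \<Longrightarrow> la x \<noteq> 0 \<Longrightarrow> f x = 0"
proof -
  have C: "(c n)\<^sup>2 \<le> q" for n using c0 cn[of n] by (cases n) auto
  have h1: "((\<lambda>n. q * ls f n) has_sum (q * nsq A f)) UNIV"
    by (rule has_sum_cmult_right[OF ls_has_sum[OF f]])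
  have h2: "((\<lambda>n. - ((c n)\<^sup>2 * ls f n)) has_sum - nsq A (S f)) UNIV"
    using S_l2(2)[OF f C] by (simp add: has_sum_uminus)
  have "((\<lambda>n. q * ls f n + - ((c n)\<^sup>2 * ls f n)) has_sum (q * nsq A f + - nsq A (S f))) UNIV"
    by (rule has_sum_add[OF h1 h2])
  then have h: "((\<lambda>n. (q - (c n)\<^sup>2) * ls f n) has_sum 0) UNIV"
    using eq by (simp add: algebra_simps)
  have lsnn: "ls f n \<ge> 0" for n unfolding ls_def by (rule sum_nonneg) simp
  fix x assume x: "x \<in> A" "la x \<noteq> 0"
  let ?n = "la x"
  have "(q - (c ?n)\<^sup>2) * ls f ?n = 0"
    by (rule nonneg_has_sum_le_0D[OF h]) (use C lsnn in auto)
  moreover have "q - (c ?n)\<^sup>2 > 0" using cn[of ?n] x by simp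
  ultimately have "ls f ?n = 0" by simp
  then have "\<forall>y\<in>lev A la ?n. (cmod (f y))\<^sup>2 = 0"
    unfolding ls_def by (subst sum_nonneg_eq_0_iff[symmetric]) (auto simp: fin)
  then show "f x = 0" using x by (auto simp: lev_def)
qed

lemma eig0:
  assumes f: "f \<in> l2 A" and c0: "(c 0)\<^sup>2 = q" and C: "\<And>n. (c n)\<^sup>2 \<le> q"
    and supp: "\<And>x. la x \<noteq> 0 \<Longrightarrow> f x = 0"
  shows "nsq A (S f) = q * nsq A f"
proof -
  have ls0: "ls f n = 0" if "n \<noteq> 0" for n
    unfolding ls_def by (rule sum.neutral) (use that supp in \<open>auto simp: lev_def\<close>)
  have a: "(ls f has_sum ls f 0) UNIV"
    by (rule has_sum_finite_neutralI[of "{0}"]) (auto simp: ls0)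
  have b: "((\<lambda>n. (c n)\<^sup>2 * ls f n) has_sum (q * ls f 0)) UNIV"
    by (rule has_sum_finite_neutralI[of "{0}"]) (auto simp: ls0 c0)
  have "nsq A f = ls f 0" using has_sum_unique[OF ls_has_sum[OF f] a] .
  moreover have "nsq A (S f) = q * ls f 0" using has_sum_unique[OF S_l2(2)[OF f C] b] .
  ultimately show ?thesis by simp
qed

end


context rtree begin

lemma lev_nonempty: assumes lf: "leafless V E" shows "lev V dp n \<noteq> {}"
proof (induction n)
  case 0 then show ?case by (simp add: lev0)
next
  case (Suc n)
  then obtain v where v: "v \<in> lev V dp n" by blast
  then have "Chi E v \<noteq> {}" using lf by (auto simp: leafless_def lev_def)
  then obtain u where u: "(v, u) \<in> E" by (auto simp: Chi_def)
  then have "u \<in> lev V dp (Suc n)" using depth_edge[OF u] v E_sub by (auto simp: lev_def)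
  then show ?case by blast
qed

lemma iso_from_levels:
  assumes one: "\<And>n x y. x \<in> lev V dp n \<Longrightarrow> y \<in> lev V dp n \<Longrightarrow> x = y"
    and ne: "\<And>n. lev V dp n \<noteq> {}"
  shows "iso_to_nat V E"
  unfolding iso_to_nat_def
proof (intro exI[of _ dp] conjI ballI)
  show "bij_betw dp V UNIV"
    unfolding bij_betw_def
  proof
    show "inj_on dp V" using one by (auto simp: inj_on_def lev_def)
    show "dp ` V = UNIV"
    proof (intro set_eqI iffI)
      fix n :: nat assume "n \<in> UNIV"
      obtain x where "x \<in> lev V dp n" using ne[of n] by blast
      then show "n \<in> dp ` V" by (auto simp: lev_def)
    qed auto
  qed
next
  fix u v assume u: "u \<in> V" and v: "v \<in> V"
  show "(u, v) \<in> E \<longleftrightarrow> dp v = dp u + 1"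
  proof
    assume "(u, v) \<in> E" then show "dp v = dp u + 1" using depth_edge by simp
  next
    assume d: "dp v = dp u + 1"
    then have "v \<noteq> r" using depth_root by auto
    then have "has_parent E v" using v nonroot_parent by blast
    then have e: "(parent E v, v) \<in> E" by (rule has_parent_edge)
    then have "dp (parent E v) = dp u" using depth_edge[OF e] d by simp
    moreover have "parent E v \<in> V" using e E_sub by auto
    ultimately have "parent E v = u" using one[of "parent E v" "dp u" u] u by (auto simp: lev_def)
    then show "(u, v) \<in> E" using e by simp
  qed
qed

end

lemma cq_lt: assumes q: "q > 1" and n: "n > 0" shows "(cq q n)\<^sup>2 < q"
proof -
  have "real n * 1 < real n * q" using q n by (intro mult_strict_left_mono) auto
  then have "real n + q < q * (real n + 1)" by (simp add: algebra_simps)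
  then have "(real n + q) / (real n + 1) < q" by (simp add: divide_less_eq add_pos_pos)
  then show ?thesis using cq_sq[of q n] q by simp
qed

lemma cq_0: "q \<ge> 1 \<Longrightarrow> (cq q 0)\<^sup>2 = q" using cq_sq[of q 0] by simp

lemma cq_le: assumes "q > 1" shows "(cq q n)\<^sup>2 \<le> q"
  using cq_lt[OF assms, of n] cq_0[of q] assms by (cases n) auto

lemma nsq_empty: "nsq {} f = 0" by (simp add: nsq_def)

lemma nsq_zero: "nsq A (\<lambda>_. 0) = 0" by (simp add: nsq_def)

theorem forward:
  assumes T: "rooted_directed_tree V E" and lf: "leafless V E" and fin: "locally_finite V E"
    and q: "q > 1"
    and ue: "unitarily_equivalent V (dirichlet_shift V E q) ({..<m} \<times> (UNIV :: nat set)) (classical_dirichlet_sum m q)"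
  shows "iso_to_nat V E"
proof -
  interpret rtree V E by unfold_locales (rule T)
  have q1: "q \<ge> 1" using q by simp
  interpret a: gforest V dp "\<lambda>u. u \<in> V \<and> has_parent E u" "dirichlet_weight V E q" "parent E" "cq q"
    by (rule src_gforest[OF T lf fin q1])
  interpret b: gforest "TB m" "Tl (\<lambda>_. 0)" "TR m" "Tw q" Tp "cq q"
    by (rule tgt_gforest[OF q1]) simp
  have c0: "(cq q 0)\<^sup>2 = q" by (rule cq_0[OF q1])
  have cn: "\<And>n. n > 0 \<Longrightarrow> (cq q n)\<^sup>2 < q" by (rule cq_lt[OF q])
  have C: "\<And>n. (cq q n)\<^sup>2 \<le> q" by (rule cq_le[OF q])
  have Tl0: "Tl (\<lambda>_. 0) y = snd y" for y by (cases y) (simp add: Tl_def)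
  obtain U where unit: "unitary_between V (TB m) U" and comm: "\<And>f. f \<in> l2 V \<Longrightarrow> U (a.S f) = b.S (U f)"
    using ue unfolding unitarily_equivalent_def dirichlet_gshift classical_gshift TB_def[symmetric] by blast
  have bij: "bij_betw U (l2 V) (l2 (TB m))" using unit by (simp add: unitary_between_def)
  have Ul2: "U f \<in> l2 (TB m)" if "f \<in> l2 V" for f using bij_betw_apply[OF bij that] .
  have Unsq: "nsq (TB m) (U f) = nsq V f" if "f \<in> l2 V" for f
    using unit that by (intro l2norm_nsq) (simp add: unitary_between_def)
  have Ulin: "U (\<lambda>x. k * f x + g x) = (\<lambda>y. k * U f y + U g y)" if "f \<in> l2 V" "g \<in> l2 V" for f g k
    using unit that by (simp add: unitary_between_def)
  have Usurj: "\<exists>f\<in>l2 V. U f = g" if "g \<in> l2 (TB m)" for g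
  proof -
    have "g \<in> U ` l2 V" using bij that by (simp add: bij_betw_def)
    then show ?thesis by blast
  qed
  have z2: "(\<lambda>_. 0) \<in> l2 V" by (rule l2_fin[of "{}"]) auto
  have U0: "U (\<lambda>_. 0) = (\<lambda>_. 0)"
    using Ulin[OF z2 z2, of "-1"] by simp
  have Usc: "U (\<lambda>x. k * f x) = (\<lambda>y. k * U f y)" if "f \<in> l2 V" for f k
    using Ulin[OF that z2, of k] U0 by simp
  define \<delta> where "\<delta> = dl r"
  have \<delta>l2: "\<delta> \<in> l2 V" unfolding \<delta>_def by (rule l2_fin[of "{r}"]) (auto simp: dl_def root_in)
  have \<delta>nsq: "nsq V \<delta> = 1" unfolding \<delta>_def using nsq_fin(2)[of "{r}" V "dl r"] root_in by (simp add: dl_def)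
  have \<delta>supp: "\<delta> x = 0" if "dp x \<noteq> 0" for x
    using that depth_root unfolding \<delta>_def dl_def by auto
  define u where "u = U \<delta>"
  have ul2: "u \<in> l2 (TB m)" unfolding u_def by (rule Ul2[OF \<delta>l2])
  have unsq: "nsq (TB m) u = 1" unfolding u_def using Unsq[OF \<delta>l2] \<delta>nsq by simp
  have Sd: "nsq V (a.S \<delta>) = q" using a.eig0[OF \<delta>l2 c0 C \<delta>supp] \<delta>nsq by simp
  have Su: "nsq (TB m) (b.S u) = q * nsq (TB m) u"
    using Unsq[OF a.S_l2(1)[OF \<delta>l2 C]] comm[OF \<delta>l2] Sd unsq by (simp add: u_def)
  have usupp: "u y = 0" if "y \<in> TB m" "snd y \<noteq> 0" for y
    using b.eig[OF ul2 c0 cn Su] that by (simp add: Tl0)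
  have m0: "m \<noteq> 0"
  proof
    assume "m = 0"
    then have "TB m = {}" by (simp add: TB_def)
    then show False using unsq by (simp add: nsq_empty)
  qed
  have gj: "\<exists>a. dl (j, 0) = (\<lambda>y. a * u y)" if j: "j < m" for j
  proof -
    have g: "dl (j, 0) \<in> l2 (TB m)" by (rule l2_fin[of "{(j,0)}"]) (auto simp: dl_def TB_def j)
    have gn: "nsq (TB m) (dl (j, 0)) = 1"
      using nsq_fin(2)[of "{(j,0)}" "TB m" "dl (j,0)"] j by (simp add: dl_def TB_def)
    obtain f where f: "f \<in> l2 V" "U f = dl (j, 0)" using Usurj[OF g] by blast
    have fn: "nsq V f = 1" using Unsq[OF f(1)] f(2) gn by simp
    have "nsq (TB m) (b.S (dl (j, 0))) = q * nsq (TB m) (dl (j, 0))"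
      by (rule b.eig0[OF g c0 C]) (auto simp: dl_def Tl0)
    then have "nsq V (a.S f) = q * nsq V f"
      using Unsq[OF a.S_l2(1)[OF f(1) C]] comm[OF f(1)] f(2) gn fn by simp
    then have fz: "f x = 0" if "x \<in> V" "dp x \<noteq> 0" for x using a.eig[OF f(1) c0 cn] that by blast
    have "f = (\<lambda>x. f r * \<delta> x)"
    proof (rule ext)
      fix x show "f x = f r * \<delta> x"
      proof (cases "x = r")
        case True then show ?thesis by (simp add: \<delta>_def dl_def)
      next
        case False
        have "f x = 0"
        proof (cases "x \<in> V")
          case True then show ?thesis using fz depth0 False by blast
        next
          case False then show ?thesis using f(1) by (simp add: l2_def)
        qed
        then show ?thesis using False by (simp add: \<delta>_def dl_def)
      qed
    qed
    then have "dl (j, 0) = (\<lambda>y. f r * u y)" using f(2) Usc[OF \<delta>l2] by (metis u_def)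
    then show ?thesis by blast
  qed
  have m1: "m = 1"
  proof (rule ccontr)
    assume "m \<noteq> 1"
    then have "1 < m" using m0 by simp
    obtain a0 where a0: "dl (0, 0) = (\<lambda>y. a0 * u y)" using gj m0 by blast
    obtain a1 where a1: "dl (1, 0) = (\<lambda>y. a1 * u y)" using gj \<open>1 < m\<close> by blast
    have "1 = a0 * u (0, 0)" using fun_cong[OF a0, of "(0,0)"] by (simp add: dl_def)
    then have u00: "u (0, 0) \<noteq> 0" by auto
    have "0 = a1 * u (0, 0)" using fun_cong[OF a1, of "(0,0)"] by (simp add: dl_def)
    then have "a1 = 0" using u00 by simp
    then show False using fun_cong[OF a1, of "(1,0)"] by (simp add: dl_def)
  qed
  define \<alpha> where "\<alpha> = u (0, 0)"
  have uform: "u = (\<lambda>y. \<alpha> * dl (0, 0) y)"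
  proof (rule ext)
    fix y show "u y = \<alpha> * dl (0, 0) y"
    proof (cases "y = (0, 0)")
      case True then show ?thesis by (simp add: \<alpha>_def dl_def)
    next
      case False
      have "u y = 0"
      proof (cases "y \<in> TB m")
        case True
        then have "snd y \<noteq> 0" using False m1 by (cases y) (auto simp: TB_def)
        then show ?thesis using usupp True by blast
      next
        case False then show ?thesis using ul2 by (cases y) (auto simp: l2_def)
      qed
      then show ?thesis using False by (simp add: dl_def)
    qed
  qed
  have \<alpha>nz: "\<alpha> \<noteq> 0"
  proof
    assume "\<alpha> = 0"
    then have "u = (\<lambda>_. 0)" using uform by simp
    then show False using unsq by (simp add: nsq_zero)
  qed
  define v where "v k = (a.S ^^ k) \<delta>" for k
  have vSuc: "v (Suc k) = a.S (v k)" for k by (simp add: v_def)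
  have vl2: "v k \<in> l2 V" for k
    by (induction k) (simp_all add: v_def \<delta>l2 a.S_l2(1)[OF _ C])
  have wpos: "dirichlet_weight V E q x > 0" if "x \<in> V" "has_parent E x" for x
  proof -
    have e: "(parent E x, x) \<in> E" using that has_parent_edge by blast
    then have "parent E x \<in> V" using E_sub by auto
    then have "finite (Chi E (parent E x))" using fin by (simp add: locally_finite_def)
    moreover have "x \<in> Chi E (parent E x)" using e by (simp add: Chi_def)
    ultimately have "card (Chi E (parent E x)) > 0" by (auto simp: card_gt_0_iff)
    then show ?thesis using q1 by (simp add: dirichlet_weight_def Let_def add_pos_pos)
  qed
  have vU: "\<exists>\<beta>. \<beta> \<noteq> 0 \<and> U (v k) = (\<lambda>y. \<beta> * dl (0, k) y)" for k
  proof (induction k)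
    case 0 then show ?case using \<alpha>nz uform by (auto simp: v_def u_def)
  next
    case (Suc k)
    then obtain \<beta> where \<beta>: "\<beta> \<noteq> 0" "U (v k) = (\<lambda>y. \<beta> * dl (0, k) y)" by blast
    define \<beta>' where "\<beta>' = \<beta> * complex_of_real (Tw q (0, Suc k))"
    have tw: "Tw q (0, Suc k) > 0" using q1 by (simp add: Tw_def add_pos_pos)
    have "U (v (Suc k)) = b.S (\<lambda>y. \<beta> * dl (0, k) y)" using comm[OF vl2[of k]] \<beta>(2) by (simp add: vSuc)
    also have "\<dots> = (\<lambda>y. \<beta>' * dl (0, Suc k) y)"
    proof (rule ext)
      fix y show "b.S (\<lambda>y. \<beta> * dl (0, k) y) y = \<beta>' * dl (0, Suc k) y"
        using m1 by (cases y) (auto simp: gshift_def TR_def Tp_def dl_def \<beta>'_def)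
    qed
    finally have "U (v (Suc k)) = (\<lambda>y. \<beta>' * dl (0, Suc k) y)" .
    moreover have "\<beta>' \<noteq> 0" using \<beta>(1) tw by (simp add: \<beta>'_def)
    ultimately show ?case by blast
  qed
  have vsupp: "v k x = 0" if "x \<notin> lev V dp k" for k x
    using that
  proof (induction k arbitrary: x)
    case 0 then show ?case using lev0 by (simp add: v_def \<delta>_def dl_def)
  next
    case (Suc k) then show ?case unfolding vSuc by (intro a.S_supp[of k]) auto
  qed
  have vnz: "v k x \<noteq> 0" if "x \<in> lev V dp k" for k x
    using that
  proof (induction k arbitrary: x)
    case 0 then show ?case using lev0 by (simp add: v_def \<delta>_def dl_def)
  next
    case (Suc k)
    then have x: "x \<in> V" "dp x = Suc k" by (auto simp: lev_def)
    then have "x \<noteq> r" using depth_root by auto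
    then have hp: "has_parent E x" using x nonroot_parent by blast
    then have e: "(parent E x, x) \<in> E" by (rule has_parent_edge)
    then have "parent E x \<in> lev V dp k" using depth_edge[OF e] x E_sub by (auto simp: lev_def)
    then have "v k (parent E x) \<noteq> 0" by (rule Suc.IH)
    moreover have "dirichlet_weight V E q x \<noteq> 0" using wpos[OF x(1) hp] by simp
    ultimately show ?case using x hp by (simp add: vSuc gshift_def)
  qed
  have one: "x1 = x2" if x1: "x1 \<in> lev V dp n" and x2: "x2 \<in> lev V dp n" for n x1 x2
  proof (rule ccontr)
    assume ne: "x1 \<noteq> x2"
    define a1 where "a1 = v n x1"
    define a2 where "a2 = v n x2"
    have a1nz: "a1 \<noteq> 0" using vnz[OF x1] by (simp add: a1_def)
    have a2nz: "a2 \<noteq> 0" using vnz[OF x2] by (simp add: a2_def)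
    define f where "f x = (if x = x1 then cnj a2 else if x = x2 then - cnj a1 else 0)" for x
    have FV: "{x1, x2} \<subseteq> V" using x1 x2 by (auto simp: lev_def)
    have fout: "f x = 0" if "x \<notin> {x1, x2}" for x using that by (simp add: f_def)
    have fl2: "f \<in> l2 V" by (rule l2_fin[where F="{x1,x2}" and A=V and h=f, OF _ FV fout]) simp
    have fnsq: "nsq V f = (cmod a2)\<^sup>2 + (cmod a1)\<^sup>2"
      using nsq_fin(2)[where F="{x1,x2}" and A=V and h=f, OF _ FV fout] ne by (simp add: f_def)
    have fpos: "nsq V f > 0" using fnsq a1nz by (simp add: add_nonneg_pos)
    define h where "h = U f"
    have hl2: "h \<in> l2 (TB m)" unfolding h_def by (rule Ul2[OF fl2])
    have hnsq: "nsq (TB m) h = nsq V f" unfolding h_def by (rule Unsq[OF fl2])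
    have hk: "h (0, k) = 0" for k
    proof -
      obtain \<beta> where \<beta>: "\<beta> \<noteq> 0" "U (v k) = (\<lambda>y. \<beta> * dl (0, k) y)" using vU by blast
      define t where "t = h (0, k) / \<beta>"
      have t\<beta>: "t * \<beta> = h (0, k)" using \<beta>(1) by (simp add: t_def)
      define g where "g = (\<lambda>x. t * v k x + f x)"
      have gl2: "g \<in> l2 V" unfolding g_def by (rule l2_lin[OF vl2 fl2])
      have vs: "(\<lambda>x. (cmod (v k x))\<^sup>2) summable_on V" using vl2[of k] by (simp add: l2_def)
      have tvs: "(\<lambda>x. (cmod (t * v k x))\<^sup>2) summable_on V"
        using summable_on_cmult_left[OF vs, of "(cmod t)\<^sup>2"] by (simp add: norm_mult power_mult_distrib mult.commute)
      have vnsq: "nsq V (v k) = (cmod \<beta>)\<^sup>2"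
      proof -
        have "nsq V (v k) = nsq (TB m) (\<lambda>y. \<beta> * dl (0, k) y)" using Unsq[OF vl2[of k]] \<beta>(2) by simp
        also have "\<dots> = (cmod \<beta>)\<^sup>2"
          using nsq_fin(2)[of "{(0,k)}" "TB m" "\<lambda>y. \<beta> * dl (0, k) y"] m1 by (simp add: dl_def TB_def)
        finally show ?thesis .
      qed
      have tvnsq: "nsq V (\<lambda>x. t * v k x) = (cmod t)\<^sup>2 * nsq V (v k)"
        unfolding nsq_def by (simp add: norm_mult power_mult_distrib infsum_cmult_right vs)
      have cross: "t * v k x1 * cnj (f x1) + t * v k x2 * cnj (f x2) = 0"
      proof (cases "k = n")
        case True then show ?thesis using ne by (simp add: f_def a1_def a2_def algebra_simps)
      next
        case False
        then have "x1 \<notin> lev V dp k" "x2 \<notin> lev V dp k" using x1 x2 by (auto simp: lev_def)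
        then show ?thesis using vsupp by simp
      qed
      have "nsq V g = nsq V (\<lambda>x. t * v k x) + (\<Sum>x\<in>{x1,x2}. (cmod (t * v k x + f x))\<^sup>2 - (cmod (t * v k x))\<^sup>2)"
        unfolding g_def by (rule fmod(2)[OF tvs _ FV fout]) simp
      also have "(\<Sum>x\<in>{x1,x2}. (cmod (t * v k x + f x))\<^sup>2 - (cmod (t * v k x))\<^sup>2)
          = (cmod (f x1))\<^sup>2 + (cmod (f x2))\<^sup>2 + 2 * Re (t * v k x1 * cnj (f x1) + t * v k x2 * cnj (f x2))"
        using ne by (simp add: cmod_add_sq)
      also have "\<dots> = nsq V f" unfolding cross using ne fnsq by (simp add: f_def)
      finally have L: "nsq V g = (cmod t)\<^sup>2 * (cmod \<beta>)\<^sup>2 + nsq V f" using tvnsq vnsq by simp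
      have Ug: "U g = (\<lambda>y. h y + (t * \<beta>) * dl (0, k) y)"
        unfolding g_def using Ulin[OF vl2 fl2, of t] \<beta>(2) by (simp add: h_def fun_eq_iff mult.assoc add.commute)
      have hs: "(\<lambda>y. (cmod (h y))\<^sup>2) summable_on (TB m)" using hl2 by (simp add: l2_def)
      have "nsq (TB m) (U g) = nsq (TB m) h + (\<Sum>y\<in>{(0,k)}. (cmod (h y + (t * \<beta>) * dl (0, k) y))\<^sup>2 - (cmod (h y))\<^sup>2)"
        unfolding Ug by (rule fmod(2)[OF hs]) (auto simp: TB_def m1 dl_def)
      also have "(\<Sum>y\<in>{(0,k)}. (cmod (h y + (t * \<beta>) * dl (0, k) y))\<^sup>2 - (cmod (h y))\<^sup>2)
          = (cmod (h (0,k) + t * \<beta>))\<^sup>2 - (cmod (h (0,k)))\<^sup>2"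
        by (simp add: dl_def)
      also have "h (0,k) + t * \<beta> = 2 * h (0,k)" using t\<beta> by simp
      finally have R: "nsq (TB m) (U g) = nsq V f + ((cmod (2 * h (0,k)))\<^sup>2 - (cmod (h (0,k)))\<^sup>2)"
        using hnsq by simp
      have "(cmod t)\<^sup>2 * (cmod \<beta>)\<^sup>2 = (cmod (t * \<beta>))\<^sup>2"
        by (simp add: norm_mult power_mult_distrib)
      then have tb2: "(cmod t)\<^sup>2 * (cmod \<beta>)\<^sup>2 = (cmod (h (0, k)))\<^sup>2" by (simp only: t\<beta>)
      have "(cmod (h (0, k)))\<^sup>2 = (cmod (2 * h (0,k)))\<^sup>2 - (cmod (h (0,k)))\<^sup>2"
        using L R Unsq[OF gl2] tb2 by simp
      then have "(cmod (h (0, k)))\<^sup>2 = 0" by (simp add: norm_mult power_mult_distrib)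
      then show ?thesis by simp
    qed
    have "h = (\<lambda>_. 0)"
    proof (rule ext)
      fix y show "h y = 0"
      proof (cases "y \<in> TB m")
        case True then obtain k where "y = (0, k)" using m1 by (auto simp: TB_def)
        then show ?thesis using hk by simp
      next
        case False then show ?thesis using hl2 by (cases y) (auto simp: l2_def)
      qed
    qed
    then have "nsq V f = 0" using hnsq by (simp add: nsq_zero)
    then show False using fpos by simp
  qed
  show ?thesis
    by (rule iso_from_levels) (use one lev_nonempty[OF lf] in auto)
qed


theorem mainTheorem6:
  fixes V :: "'v set" and E :: "('v \<times> 'v) set" and q :: real
  assumes "rooted_directed_tree V E"
    and "leafless V E"
    and "locally_finite V E"
    and "countable V" and "infinite V"
    and "finite_branching_index V E"
    and "q \<ge> 1"
  shows "(\<exists>m::nat. unitarily_equivalent V (dirichlet_shift V E q)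
                     ({..<m} \<times> (UNIV :: nat set)) (classical_dirichlet_sum m q))
         \<longleftrightarrow> (q = 1 \<or> iso_to_nat V E)"
proof
  assume "\<exists>m::nat. unitarily_equivalent V (dirichlet_shift V E q)
                     ({..<m} \<times> (UNIV :: nat set)) (classical_dirichlet_sum m q)"
  then obtain m :: nat where ue: "unitarily_equivalent V (dirichlet_shift V E q)
                     ({..<m} \<times> (UNIV :: nat set)) (classical_dirichlet_sum m q)" by blast
  show "q = 1 \<or> iso_to_nat V E"
  proof (cases "q = 1")
    case False
    then have "q > 1" using assms(7) by simp
    then show ?thesis using forward[OF assms(1,2,3) _ ue] by simp
  qed simp
next
  assume "q = 1 \<or> iso_to_nat V E"
  then show "\<exists>m::nat. unitarily_equivalent V (dirichlet_shift V E q)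
                     ({..<m} \<times> (UNIV :: nat set)) (classical_dirichlet_sum m q)"
    using backward[OF assms(1,2,3,6,7)] by blast
qed

end
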